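(* Let $(k_i)_{i\in\mathbb N}\subset\mathbb N=\{1,2,3,\dots\}$ be the coding sequence of an interval translation map $T_{\alpha,\beta}$ of infinite type, and let $(X,\sigma)$ be the associated $S$-adic subshift. Then $(X,\sigma)$ is linearly recurrent if and only if $(k_i)_{i\in\mathbb N}$ is bounded and both sets $\{i : k_{2i}>1\}$ and $\{i : k_{2i-1}>1\}$ have bounded gaps.
   Context: For $0<\beta\le\alpha\le 1$ let $T_{\alpha,\beta}:[0,1]\to[0,1]$ be $T_{\alpha,\beta}(x)=x+\alpha$ on $[0,1-\alpha)$, $x+\beta$ on $[1-\alpha,1-\beta)$, $x-1+\beta$ on $[1-\beta,1]$. Let $U=\{(\alpha,\beta):0<\beta\le\alpha\le 1\}$ and $G(\alpha,\beta)=\big(\beta/\alpha,\ (\beta-1)/\alpha+\lfloor 1/\alpha\rfloor\big)$. The map $T_{\alpha,\beta}$ is of infinite type if $G^n(\alpha,\beta)$ lies in the interior of $U$ for all $n\ge 0$; then $\Omega=\bigcap_{n\ge0}\overline{T^n_{\alpha,\beta}([0,1])}$ is a Cantor set. The coding sequence is $k_i=\lfloor 1/\alpha_i\rfloor$ where $(\alpha_i,\beta_i)=G^{i-1}(\alpha,\beta)$; coding sequences of infinite type maps are exactly the sequences in $\mathbb N$ with $k_{2i}>1$ for infinitely many $i$ and $k_{2i-1}>1$ for infinitely many $i$. For $k\in\mathbb N$ let $\chi_k$ be the substitution on $\{1,2,3\}$ given by $1\mapsto 2$, $2\mapsto 31^k$, $3\mapsto 31^{k-1}$. Let $\rho=\lim_{i\to\infty}\chi_{k_1}\circ\cdots\circ\chi_{k_i}(3)$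 (the itinerary of the point $1$ with respect to the partition $[0,1-\alpha),[1-\alpha,1-\beta),[1-\beta,1]$ coded by $1,2,3$), and let $X$ be the closure of $\{\sigma^n\rho\}_{n\in\mathbb N}$ under the left shift $\sigma$; $(\Omega,T_{\alpha,\beta})$ is isomorphic to $(X,\sigma)$. A subshift $(X,\sigma)$ is linearly recurrent if there is $L$ such that for every $x\in X$ every subword $w$ of $x$ reappears in $x$ with gap at most $L|w|$. *)

theory Defs
  imports "HOL-Analysis.Analysis"
begin

text \<open>Words over the alphabet {1,2,3} are lists of naturals; infinite words are
  functions nat => nat (positions indexed from 0), carrying the product topology
  of the discrete space nat.\<close>

fun chi :: "nat \<Rightarrow> nat \<Rightarrow> nat list" where
  "chi k a = (if a = 1 then [2]
              else if a = 2 then 3 # replicate k 1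
              else if a = 3 then 3 # replicate (k - 1) 1
              else [])"

definition subst_word :: "nat \<Rightarrow> nat list \<Rightarrow> nat list" where
  "subst_word k w = concat (map (chi k) w)"

definition comp_word :: "(nat \<Rightarrow> nat) \<Rightarrow> nat \<Rightarrow> nat list" where
  "comp_word k i = foldr (\<lambda>j w. subst_word (k j) w) [1..<Suc i] [3]"

definition rho :: "(nat \<Rightarrow> nat) \<Rightarrow> nat \<Rightarrow> nat" where
  "rho k n = (THE a. \<exists>i0. \<forall>i\<ge>i0. n < length (comp_word k i) \<and> comp_word k i ! n = a)"

definition shift :: "(nat \<Rightarrow> nat) \<Rightarrow> nat \<Rightarrow> nat" where
  "shift x = (\<lambda>m. x (Suc m))"

definition subshift :: "(nat \<Rightarrow> nat) \<Rightarrow> (nat \<Rightarrow> nat) set" where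
  "subshift k = closure {(shift ^^ n) (rho k) | n. n \<ge> 1}"

definition linearly_recurrent :: "(nat \<Rightarrow> nat) set \<Rightarrow> bool" where
  "linearly_recurrent X \<longleftrightarrow> (\<exists>L::nat. \<forall>x\<in>X. \<forall>i n. n > 0 \<longrightarrow>
      (\<exists>j. i < j \<and> j \<le> i + L * n \<and> (\<forall>m<n. x (j + m) = x (i + m))))"

definition bounded_gaps :: "nat set \<Rightarrow> bool" where
  "bounded_gaps S \<longleftrightarrow> (\<exists>g. \<forall>n. \<exists>i\<in>S. n < i \<and> i \<le> n + g)"

text \<open>Coding sequences of infinite type interval translation maps (as characterized
  in the paper): k_i >= 1, and k_{2i} > 1 resp. k_{2i-1} > 1 for infinitely many i.
  The sequence is indexed from 1; the value k 0 is irrelevant.\<close>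
definition infinite_type_coding :: "(nat \<Rightarrow> nat) \<Rightarrow> bool" where
  "infinite_type_coding k \<longleftrightarrow> (\<forall>i\<ge>1. k i \<ge> 1)
     \<and> infinite {i. i \<ge> 1 \<and> k (2 * i) > 1}
     \<and> infinite {i. i \<ge> 1 \<and> k (2 * i - 1) > 1}"

end

theory Submission
  imports Defs
begin

lemma open_nat_singleton: "open {a::nat}"
by (rule open_discrete)

lemma shift_pow: "(shift ^^ n) x m = x (n + m)"
  by (induction n arbitrary: m) (auto simp: shift_def)

lemma closure_window:
  fixes x :: "nat \<Rightarrow> nat"
  assumes "x \<in> closure T"
  shows "\<exists>y\<in>T. \<forall>m<N. y m = x m"
proof -
  define U where "U = (\<Inter>m\<in>{..<N}. (\<lambda>y. y m) -` {x m})"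
  have "open U" unfolding U_def
  proof (intro open_INT finite_lessThan ballI)
    fix m assume "m \<in> {..<N}"
    have "open ((\<lambda>y::nat\<Rightarrow>nat. y m) -` {x m} \<inter> UNIV)"
      using continuous_on_product_coordinates[of m] open_nat_singleton
      by (metis continuous_on_open_vimage[OF open_UNIV])
    then show "open ((\<lambda>y::nat\<Rightarrow>nat. y m) -` {x m})" by simp
  qed
  have "x \<in> U" by (simp add: U_def)
  then have "U \<inter> closure T \<noteq> {}" using assms by blast
  then have "U \<inter> T \<noteq> {}" using open_Int_closure_eq_empty[OF \<open>open U\<close>] by blast
  then show ?thesis by (auto simp: U_def)
qed



declare chi.simps[simp del]

lemma chi1[simp]: "chi c (Suc 0) = [2]" by (simp add: chi.simps)
lemma chi2[simp]: "chi c 2 = 3 # replicate c 1" by (simp add: chi.simps)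
lemma chi3[simp]: "chi c 3 = 3 # replicate (c - 1) 1" by (simp add: chi.simps)

lemma subst_Nil[simp]: "subst_word c [] = []" by (simp add: subst_word_def)
lemma subst_Cons[simp]: "subst_word c (a # w) = chi c a @ subst_word c w" by (simp add: subst_word_def)
lemma subst_append[simp]: "subst_word c (u @ v) = subst_word c u @ subst_word c v" by (simp add: subst_word_def)

fun sig :: "(nat \<Rightarrow> nat) \<Rightarrow> nat \<Rightarrow> nat \<Rightarrow> nat list \<Rightarrow> nat list" where
  "sig k j 0 w = w"
| "sig k j (Suc d) w = subst_word (k j) (sig k (Suc j) d w)"

lemma sig_append[simp]: "sig k j d (u @ v) = sig k j d u @ sig k j d v"
  by (induction d arbitrary: j) auto

lemma sig_Nil[simp]: "sig k j d [] = []"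
  by (induction d arbitrary: j) auto

lemma sig_Cons: "sig k j d (c # w) = sig k j d [c] @ sig k j d w"
  using sig_append[of k j d "[c]" w] by simp

lemma sig_concat: "sig k j d w = concat (map (\<lambda>c. sig k j d [c]) w)"
  by (induction w) (simp, subst sig_Cons, simp)

lemma sig_comp: "sig k j (a + b) w = sig k j a (sig k (j + a) b w)"
  by (induction a arbitrary: j) auto

lemma sig_comp': "a + b = D \<Longrightarrow> j + a = j' \<Longrightarrow> sig k j D w = sig k j a (sig k j' b w)"
  using sig_comp[of k j a b w] by simp

lemma sig_two: "sig k j 2 w = subst_word (k j) (subst_word (k (Suc j)) w)"
  by (simp add: numeral_2_eq_2)

lemma sig_one: "sig k j 1 w = subst_word (k j) w"
  by simp

lemma sig_Suc_inner: "sig k j (Suc d) w = sig k j d (subst_word (k (j + d)) w)"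
proof -
  have "sig k j (d + 1) w = sig k j d (sig k (j + d) 1 w)" by (rule sig_comp)
  then show ?thesis by simp
qed

lemma upt_Suc_shift: "[j..<j + Suc d] = j # [Suc j..<Suc j + d]"
  by (simp add: upt_rec)

lemma foldr_sig: "foldr (\<lambda>i w. subst_word (k i) w) [j..<j + d] w = sig k j d w"
proof (induction d arbitrary: j)
  case 0 then show ?case by simp
next
  case (Suc d)
  have "[j..<j + Suc d] = j # [Suc j..<Suc j + d]" by (rule upt_Suc_shift)
  then show ?case using Suc[of "Suc j"] by (simp del: upt_Suc)
qed

lemma comp_word_sig: "comp_word k i = sig k 1 i [3]"
  unfolding comp_word_def using foldr_sig[of k 1 i "[3]"] by simp

definition abc :: "nat list \<Rightarrow> bool" where "abc w \<longleftrightarrow> set w \<subseteq> {1,2,3}"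

lemma abc_simps[simp]: "abc [] " "abc (a # w) \<longleftrightarrow> a \<in> {1,2,3} \<and> abc w"
  "abc (u @ v) \<longleftrightarrow> abc u \<and> abc v" "abc (replicate n a) \<longleftrightarrow> n = 0 \<or> a \<in> {1,2,3}"
  by (auto simp: abc_def)

lemma abc_chi: "abc (chi c a)"
  by (simp add: chi.simps)

lemma abc_subst: "abc (subst_word c w)"
  by (induction w) (auto simp: abc_chi)

lemma abc_sig: "abc w \<Longrightarrow> abc (sig k j d w)"
  by (cases d) (auto simp: abc_subst)

lemma abc_take: "abc w \<Longrightarrow> abc (take n w)" and abc_drop: "abc w \<Longrightarrow> abc (drop n w)"
  by (auto simp: abc_def dest: in_set_takeD in_set_dropD)

lemma abc_nth: "abc w \<Longrightarrow> i < length w \<Longrightarrow> w ! i \<in> {1,2,3}"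
  using nth_mem[of i w] unfolding abc_def by blast

lemma sig3_Cons: "\<exists>r. sig k j d [3] = 3 # r"
proof (induction d arbitrary: j)
  case 0 then show ?case by simp
next
  case (Suc d)
  obtain r where "sig k (Suc j) d [3] = 3 # r" using Suc by blast
  then show ?case by simp
qed

lemma sig3_prefix: "\<exists>r. sig k j (d + e) [3] = sig k j d [3] @ r"
proof -
  obtain r where r: "sig k (j + d) e [3] = 3 # r" using sig3_Cons by blast
  have "sig k j (d + e) [3] = sig k j d (sig k (j + d) e [3])" by (rule sig_comp)
  also have "\<dots> = sig k j d [3] @ sig k j d r" by (simp add: r sig_Cons[of k j d 3 r])
  finally show ?thesis by blast
qed

lemma length_sig_Cons: "length (sig k j d (c # w)) = length (sig k j d [c]) + length (sig k j d w)"
  by (subst sig_Cons) simp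

locale kpos =
  fixes k :: "nat \<Rightarrow> nat"
  assumes kp: "\<And>i. 1 \<le> i \<Longrightarrow> 1 \<le> k i"
begin

lemma chi_ne: "a \<in> {1,2,3} \<Longrightarrow> chi c a \<noteq> []"
  by (auto simp: chi.simps)

lemma subst_ne: "1 \<le> c \<Longrightarrow> abc w \<Longrightarrow> w \<noteq> [] \<Longrightarrow> subst_word c w \<noteq> []"
  by (cases w) auto

lemma sig_ne: "1 \<le> j \<Longrightarrow> abc w \<Longrightarrow> w \<noteq> [] \<Longrightarrow> sig k j d w \<noteq> []"
proof (induction d arbitrary: j)
  case 0 then show ?case by simp
next
  case (Suc d)
  have "sig k (Suc j) d w \<noteq> []" using Suc by simp
  moreover have "abc (sig k (Suc j) d w)" using Suc.prems abc_sig by blast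
  ultimately show ?case using subst_ne kp Suc.prems by simp
qed

lemma sig_len_pos: "1 \<le> j \<Longrightarrow> a \<in> {1,2,3} \<Longrightarrow> 1 \<le> length (sig k j d [a])"
  using sig_ne[of j "[a]" d] by (cases "sig k j d [a]") auto

lemma sig_len_mono: "1 \<le> j \<Longrightarrow> abc w \<Longrightarrow> length w \<le> length (sig k j d w)"
proof (induction w)
  case Nil then show ?case by simp
next
  case (Cons a w)
  then have "length w \<le> length (sig k j d w)" "1 \<le> length (sig k j d [a])"
    using sig_len_pos[of j a d] by auto
  then show ?case using length_sig_Cons[of k j d a w] by simp
qed

end



context kpos begin

lemma len3_step:
  assumes "1 \<le> a" "2 \<le> k a"
  shows "length (sig k 1 (a - 1) [3]) + 1 \<le> length (sig k 1 a [3])"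
proof -
  obtain a' where a: "a = Suc a'" using assms by (cases a) auto
  have "sig k 1 a [3] = sig k 1 a' (subst_word (k (1 + a')) [3])"
    unfolding a by (rule sig_Suc_inner)
  also have "subst_word (k (1 + a')) [3] = 3 # replicate (k a - 1) 1"
    using a by simp
  also have "sig k 1 a' (3 # replicate (k a - 1) 1) = sig k 1 a' [3] @ sig k 1 a' (replicate (k a - 1) 1)"
    by (rule sig_Cons)
  finally have e: "sig k 1 a [3] = sig k 1 a' [3] @ sig k 1 a' (replicate (k a - 1) 1)" .
  have "length (replicate (k a - 1) (1::nat)) \<le> length (sig k 1 a' (replicate (k a - 1) 1))"
    by (rule sig_len_mono) auto
  then have "1 \<le> length (sig k 1 a' (replicate (k a - 1) 1))" using assms by simp
  then show ?thesis using e a by simp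
qed

end

lemma len3_mono: "d \<le> d' \<Longrightarrow> length (sig k j d [3]) \<le> length (sig k j d' [3])"
  using sig3_prefix[of k j d "d' - d"] by auto

lemma sig3_prefix': "d \<le> d' \<Longrightarrow> \<exists>r. sig k j d' [3] = sig k j d [3] @ r"
  using sig3_prefix[of k j d "d' - d"] by auto

lemma itc_kpos: "infinite_type_coding k \<Longrightarrow> kpos k"
  unfolding infinite_type_coding_def kpos_def by auto

lemma len3_unbounded:
  assumes "infinite_type_coding k"
  shows "\<exists>D. n < length (sig k 1 D [3])"
proof (induction n)
  case 0 show ?case by (rule exI[of _ 0]) simp
next
  case (Suc n)
  then obtain D where D: "n < length (sig k 1 D [3])" by blast
  have inf: "infinite {i. i \<ge> 1 \<and> k (2 * i - 1) > 1}" using assms by (simp add: infinite_type_coding_def)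
  then obtain i where i: "i > D" "i \<in> {i. i \<ge> 1 \<and> k (2 * i - 1) > 1}"
    by (meson infinite_nat_iff_unbounded)
  define a where "a = 2 * i - 1"
  have a1: "1 \<le> a" "2 \<le> k a" "D \<le> a - 1" using i by (auto simp: a_def)
  interpret kpos k using itc_kpos[OF assms] .
  have "length (sig k 1 (a - 1) [3]) + 1 \<le> length (sig k 1 a [3])" using len3_step a1 by blast
  moreover have "length (sig k 1 D [3]) \<le> length (sig k 1 (a - 1) [3])" using len3_mono a1 by blast
  ultimately show ?case using D by (intro exI[of _ a]) simp
qed

lemma rho_nth:
  assumes "infinite_type_coding k" "n < length (sig k 1 D [3])"
  shows "rho k n = sig k 1 D [3] ! n"
  unfolding rho_def comp_word_sig
proof (rule the_equality)
  show "\<exists>i0. \<forall>i\<ge>i0. n < length (sig k 1 i [3]) \<and> sig k 1 i [3] ! n = sig k 1 D [3] ! n"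
  proof (intro exI allI impI)
    fix i assume "D \<le> i"
    then obtain r where "sig k 1 i [3] = sig k 1 D [3] @ r" using sig3_prefix' by blast
    then show "n < length (sig k 1 i [3]) \<and> sig k 1 i [3] ! n = sig k 1 D [3] ! n"
      using assms(2) by (simp add: nth_append)
  qed
next
  fix a assume "\<exists>i0. \<forall>i\<ge>i0. n < length (sig k 1 i [3]) \<and> sig k 1 i [3] ! n = a"
  then obtain i0 where i0: "\<forall>i\<ge>i0. n < length (sig k 1 i [3]) \<and> sig k 1 i [3] ! n = a" by blast
  define i where "i = max i0 D"
  obtain r where "sig k 1 i [3] = sig k 1 D [3] @ r" using sig3_prefix'[of D i] by (auto simp: i_def)
  then show "a = sig k 1 D [3] ! n" using i0[rule_format, of i] assms(2) by (auto simp: i_def nth_append)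
qed

definition rhoLR :: "(nat \<Rightarrow> nat) \<Rightarrow> nat \<Rightarrow> bool" where
  "rhoLR k L \<longleftrightarrow> (\<forall>i\<ge>1. \<forall>n>0. \<exists>j. i < j \<and> j \<le> i + L * n \<and> (\<forall>m<n. rho k (j + m) = rho k (i + m)))"

lemma LR_imp_rhoLR:
  assumes "linearly_recurrent (subshift k)"
  shows "\<exists>L. rhoLR k L"
proof -
  obtain L where L: "\<forall>x\<in>subshift k. \<forall>i n. n > 0 \<longrightarrow>
      (\<exists>j. i < j \<and> j \<le> i + L * n \<and> (\<forall>m<n. x (j + m) = x (i + m)))"
    using assms unfolding linearly_recurrent_def by blast
  have "(shift ^^ 1) (rho k) \<in> {(shift ^^ n) (rho k) |n. n \<ge> 1}" by blast
  then have xin: "(shift ^^ 1) (rho k) \<in> subshift k"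
    unfolding subshift_def by (rule subsetD[OF closure_subset])
  have "rhoLR k L" unfolding rhoLR_def
  proof (intro allI impI)
    fix i n :: nat assume i: "1 \<le> i" and n: "0 < n"
    obtain j where j: "i - 1 < j" "j \<le> i - 1 + L * n"
      "\<forall>m<n. (shift ^^ 1) (rho k) (j + m) = (shift ^^ 1) (rho k) (i - 1 + m)"
      using L xin n by blast
    show "\<exists>j. i < j \<and> j \<le> i + L * n \<and> (\<forall>m<n. rho k (j + m) = rho k (i + m))"
    proof (intro exI[of _ "j + 1"] conjI allI impI)
      fix m assume "m < n"
      then have "(shift ^^ 1) (rho k) (j + m) = (shift ^^ 1) (rho k) (i - 1 + m)" using j(3) by blast
      then show "rho k (j + 1 + m) = rho k (i + m)"
        using i by (simp only: shift_pow) (simp add: add.commute)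
    qed (use j i in auto)
  qed
  then show ?thesis by blast
qed

lemma rhoLR_imp_LR:
  assumes "rhoLR k L"
  shows "linearly_recurrent (subshift k)"
  unfolding linearly_recurrent_def
proof (rule exI[of _ L], intro ballI allI impI)
  fix x i n assume x: "x \<in> subshift k" and n: "0 < (n::nat)"
  define N where "N = i + L * n + n + 1"
  obtain y where y: "y \<in> {(shift ^^ p) (rho k) |p. p \<ge> 1}" "\<forall>m<N. y m = x m"
    using closure_window[of x _ N] x unfolding subshift_def by blast
  then obtain p where p: "p \<ge> 1" "y = (shift ^^ p) (rho k)" by blast
  have yv: "\<And>m. y m = rho k (p + m)" using p by (simp add: shift_pow)
  obtain j' where j': "p + i < j'" "j' \<le> p + i + L * n" "\<forall>m<n. rho k (j' + m) = rho k (p + i + m)"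
    using assms n p unfolding rhoLR_def by (meson le_add1 order_trans)
  show "\<exists>j. i < j \<and> j \<le> i + L * n \<and> (\<forall>m<n. x (j + m) = x (i + m))"
  proof (intro exI[of _ "j' - p"] conjI)
    show "i < j' - p" "j' - p \<le> i + L * n" using j' by auto
    show "\<forall>m<n. x (j' - p + m) = x (i + m)"
    proof (intro allI impI)
    fix m assume m: "m < n"
    have "x (j' - p + m) = y (j' - p + m)" using y(2) j' m by (simp add: N_def)
    also have "\<dots> = rho k (j' + m)" using yv j' by simp
    also have "\<dots> = rho k (p + i + m)" using j' m by simp
    also have "\<dots> = y (i + m)" using yv by (simp add: add.assoc)
    also have "\<dots> = x (i + m)" using y(2) m by (simp add: N_def)
    finally show "x (j' - p + m) = x (i + m)" .
    qed
  qed
qed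



lemma set_subst: "set (subst_word c W) = (\<Union>a\<in>set W. set (chi c a))"
  by (simp add: subst_word_def)

lemma in_subst: "a \<in> set W \<Longrightarrow> x \<in> set (chi c a) \<Longrightarrow> x \<in> set (subst_word c W)"
  by (auto simp: set_subst)

lemma tr1: "1 \<in> set W \<Longrightarrow> 2 \<in> set (subst_word c W)"
  using in_subst[of 1 W 2 c] by simp

lemma tr2: "2 \<in> set W \<Longrightarrow> 1 \<le> c \<Longrightarrow> 3 \<in> set (subst_word c W) \<and> 1 \<in> set (subst_word c W)"
  using in_subst[of 2 W 3 c] in_subst[of 2 W 1 c] by simp

lemma tr3: "3 \<in> set W \<Longrightarrow> 3 \<in> set (subst_word c W)"
  using in_subst[of 3 W 3 c] by simp

lemma tr3b: "3 \<in> set W \<Longrightarrow> 2 \<le> c \<Longrightarrow> 1 \<in> set (subst_word c W)"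
  using in_subst[of 3 W 1 c] by simp

lemma three_sig: "3 \<in> set W \<Longrightarrow> 3 \<in> set (sig k j d W)"
  by (induction d arbitrary: j) (auto intro: tr3)

context kpos begin

lemma L31even: "{3,1} \<subseteq> set W \<Longrightarrow> 1 \<le> j \<Longrightarrow> {3,1} \<subseteq> set (sig k j (2 * t) W)"
proof (induction t arbitrary: j)
  case 0 then show ?case by simp
next
  case (Suc t)
  have e: "sig k j (2 * Suc t) W = sig k j 2 (sig k (j + 2) (2 * t) W)"
    by (rule sig_comp') auto
  have X: "{3,1} \<subseteq> set (sig k (j + 2) (2 * t) W)" using Suc by simp
  have Y: "2 \<in> set (subst_word (k (Suc j)) (sig k (j + 2) (2 * t) W))"
    using X tr1 by auto
  have Y3: "3 \<in> set (subst_word (k (Suc j)) (sig k (j + 2) (2 * t) W))"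
    using X tr3 by auto
  have "sig k j 2 (sig k (j + 2) (2 * t) W) =
        subst_word (k j) (subst_word (k (Suc j)) (sig k (j + 2) (2 * t) W))"
    by (rule sig_two)
  moreover have "1 \<le> k j" using kp Suc.prems by simp
  ultimately show ?case using e Y Y3 tr2 tr3 by auto
qed

lemma Lall: "{1,2,3} \<subseteq> set W \<Longrightarrow> 1 \<le> j \<Longrightarrow> {1,2,3} \<subseteq> set (sig k j d W)"
proof (induction d arbitrary: j)
  case 0 then show ?case by simp
next
  case (Suc d)
  have X: "{1,2,3} \<subseteq> set (sig k (Suc j) d W)" using Suc by simp
  have "1 \<le> k j" using kp Suc.prems by simp
  then show ?case using X tr1 tr2 tr3 by auto
qed

lemma L3two: "e \<in> {1,2,3} \<Longrightarrow> 1 \<le> j \<Longrightarrow> 3 \<in> set (sig k j 2 [e])"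
  by (auto simp: sig_two set_subst)

lemma L3any: "e \<in> {1,2,3} \<Longrightarrow> 1 \<le> j \<Longrightarrow> 2 \<le> D \<Longrightarrow> 3 \<in> set (sig k j D [e])"
proof -
  assume a: "e \<in> {1,2,3}" "1 \<le> j" "2 \<le> D"
  have "sig k j D [e] = sig k j (D - 2) (sig k (j + (D - 2)) 2 [e])"
    by (rule sig_comp') (use a in auto)
  moreover have "3 \<in> set (sig k (j + (D - 2)) 2 [e])" using L3two a by simp
  ultimately show ?thesis using three_sig by metis
qed

lemma all_letters:
  assumes "1 \<le> j" "j \<le> a2" "a2 < a1" "odd (a1 - a2)" "2 \<le> k a1" "2 \<le> k a2"
    "a1 + 3 \<le> j + D" "e \<in> {1,2,3}"
  shows "{1,2,3} \<subseteq> set (sig k j D [e])"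
proof -
  define D2 where "D2 = D - (a1 - j) - 1"
  have D: "D = (a1 - j) + Suc D2" "2 \<le> D2" using assms by (auto simp: D2_def)
  have e1: "sig k j D [e] = sig k j (a1 - j) (sig k a1 (Suc D2) [e])"
    by (rule sig_comp') (use D assms in auto)
  define Y where "Y = sig k a1 (Suc D2) [e]"
  have "3 \<in> set (sig k (Suc a1) D2 [e])" using L3any assms D by simp
  then have Y: "{3,1} \<subseteq> set Y" unfolding Y_def using tr3 tr3b assms by auto
  obtain t where t: "a1 - a2 = Suc (2 * t)" using assms(4) by (metis oddE Suc_eq_plus1)
  have e2: "sig k j (a1 - j) Y = sig k j (a2 - j) (sig k a2 (Suc (2 * t)) Y)"
    by (rule sig_comp') (use t assms in auto)
  have "{3,1} \<subseteq> set (sig k (Suc a2) (2 * t) Y)" using L31even Y by simp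
  then have "{1,2,3} \<subseteq> set (sig k a2 (Suc (2 * t)) Y)"
    using tr1 tr3 tr3b assms by auto
  then have "{1,2,3} \<subseteq> set (sig k j (a2 - j) (sig k a2 (Suc (2 * t)) Y))"
    using Lall assms by blast
  then show ?thesis using e1 e2 Y_def by simp
qed

end



lemma hd_chi: "a \<in> {1,2,3} \<Longrightarrow> hd (chi c a) \<in> {2,3}"
  by auto

lemma chi_ne': "a \<in> {1,2,3} \<Longrightarrow> chi c a \<noteq> []"
  by auto

lemma hd_subst: "abc W \<Longrightarrow> W \<noteq> [] \<Longrightarrow> hd (subst_word c W) \<in> {2,3}"
  by (cases W) (auto simp: hd_append chi_ne' hd_chi)

lemma subst_ne': "abc W \<Longrightarrow> W \<noteq> [] \<Longrightarrow> subst_word c W \<noteq> []"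
  by (cases W) (auto simp: chi_ne')

lemma last_subst: "1 \<le> c \<Longrightarrow> W \<noteq> [] \<Longrightarrow> last W \<in> {1,2} \<Longrightarrow> last (subst_word c W) \<in> {1,2}"
proof -
  assume a: "1 \<le> c" "W \<noteq> []" "last W \<in> {1,2}"
  have "W = butlast W @ [last W]" using a by simp
  then have "subst_word c W = subst_word c (butlast W) @ chi c (last W)"
    by (metis subst_append subst_Cons subst_Nil append_Nil2)
  moreover have "last (chi c (last W)) \<in> {1,2}" using a by auto
  moreover have "chi c (last W) \<noteq> []" using a by auto
  ultimately show ?thesis by simp
qed

lemma chi_prefix_eq:
  assumes c: "1 \<le> c" and uv: "u \<in> {1,2,3}" "v \<in> {1,2,3}"
    and X: "(X \<noteq> [] \<and> hd X \<noteq> 1) \<or> (X = [] \<and> u \<noteq> 3)"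
    and Y: "Y = [] \<or> hd Y \<noteq> 1"
    and eq: "chi c u @ X @ Z = chi c v @ Y"
  shows "u = v"
proof (rule ccontr)
  assume ne: "u \<noteq> v"
  obtain c' where c': "c = Suc c'" using c by (cases c) auto
  have r1: "\<And>W::nat list. drop c (3 # replicate c 1 @ W) = 1 # W"
  proof -
    fix W :: "nat list"
    have "3 # replicate c 1 @ W = 3 # replicate c' 1 @ (1 # W)"
      using c' by (simp add: replicate_app_Cons_same)
    then show "drop c (3 # replicate c 1 @ W) = 1 # W" using c' by simp
  qed
  have r2: "\<And>W::nat list. drop c (3 # replicate (c - 1) 1 @ W) = W" using c' by simp
  consider "u = 1" "v \<noteq> 1" | "u \<noteq> 1" "v = 1" | "u = 2" "v = 3" | "u = 3" "v = 2"
    using uv ne by auto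
  then show False
  proof cases
    case 1 then show ?thesis using eq uv by auto
  next
    case 2 then show ?thesis using eq uv by auto
  next
    case 3
    have "drop c (3 # replicate c 1 @ X @ Z) = drop c (3 # replicate (c - 1) 1 @ Y)"
      using eq 3 by simp
    then have "1 # X @ Z = Y" using r1 r2 by simp
    then show ?thesis using Y by auto
  next
    case 4
    have "drop c (3 # replicate (c - 1) 1 @ X @ Z) = drop c (3 # replicate c 1 @ Y)"
      using eq 4 by simp
    then have "X @ Z = 1 # Y" using r1 r2 by simp
    then show ?thesis using X 4 by (cases X) auto
  qed
qed

lemma subst_prefix:
  assumes "1 \<le> c" "abc U" "abc V" "U \<noteq> []" "last U \<in> {1,2}"
    "subst_word c U @ Z = subst_word c V"
  shows "\<exists>Z'. U @ Z' = V"
  using assms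
proof (induction U arbitrary: V Z)
  case Nil then show ?case by simp
next
  case (Cons u U')
  obtain v V' where V: "V = v # V'"
    using Cons.prems subst_ne'[of "u # U'" c] by (cases V) auto
  have eq: "chi c u @ subst_word c U' @ Z = chi c v @ subst_word c V'"
    using Cons.prems(6) V by simp
  have X: "(subst_word c U' \<noteq> [] \<and> hd (subst_word c U') \<noteq> 1) \<or> (subst_word c U' = [] \<and> u \<noteq> 3)"
  proof (cases "U' = []")
    case True
    have "u \<in> {1,2}" using Cons.prems(5) True by simp
    then show ?thesis using True by auto
  next
    case False then show ?thesis using Cons.prems hd_subst[of U' c] subst_ne'[of U' c] by auto
  qed
  have Y: "subst_word c V' = [] \<or> hd (subst_word c V') \<noteq> 1"
  proof (cases "V' = []")
    case False
    have "abc V'" using Cons.prems(3) V by simp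
    then have "hd (subst_word c V') \<in> {2,3}" using hd_subst False by blast
    then show ?thesis by auto
  qed simp
  have uv: "u = v" using chi_prefix_eq[OF Cons.prems(1) _ _ X Y eq] Cons.prems V by simp
  then have eq2: "subst_word c U' @ Z = subst_word c V'" using eq by simp
  show ?case
  proof (cases "U' = []")
    case True then show ?thesis using V uv by simp
  next
    case False
    then obtain Z' where "U' @ Z' = V'"
      using Cons.IH[OF Cons.prems(1) _ _ False _ eq2] Cons.prems V by auto
    then show ?thesis using V uv by auto
  qed
qed

lemma recog1:
  assumes "1 \<le> c" "abc U" "abc V" "U \<noteq> []" "last U \<in> {1,2}"
    "take (length (subst_word c U)) (drop q (subst_word c V)) = subst_word c U"
  shows "\<exists>t. q = length (subst_word c (take t V)) \<and> take (length U) (drop t V) = U"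
  using assms
proof (induction V arbitrary: q)
  case Nil then show ?case using subst_ne'[of U c] by simp
next
  case (Cons v V)
  have SU: "subst_word c U \<noteq> []" "hd (subst_word c U) \<in> {2,3}"
    using Cons.prems subst_ne' hd_subst by auto
  have eqV: "subst_word c (v # V) = chi c v @ subst_word c V" by simp
  consider "q = 0" | "0 < q" "q < length (chi c v)" | "length (chi c v) \<le> q" by linarith
  then show ?case
  proof cases
    case 1
    then have "subst_word c U @ drop (length (subst_word c U)) (subst_word c (v # V)) = subst_word c (v # V)"
      using Cons.prems(6) by (metis append_take_drop_id drop_0)
    then obtain Z' where "U @ Z' = v # V"
      using subst_prefix[OF Cons.prems(1,2,3,4,5)] by blast
    then have "take (length U) (drop 0 (v # V)) = U" by (metis append_eq_conv_conj drop_0)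
    then show ?thesis using 1 by (intro exI[of _ 0]) simp
  next
    case 2
    have "hd (take (length (subst_word c U)) (drop q (subst_word c (v # V)))) = subst_word c (v # V) ! q"
      using 2 SU by (simp add: hd_drop_conv_nth take_Suc_conv_app_nth hd_take nth_append)
    also have "\<dots> = chi c v ! q" using 2 by (simp add: nth_append)
    also have "\<dots> = 1" using 2 Cons.prems(3) by (auto simp: nth_Cons')
    finally show ?thesis using Cons.prems(6) SU by simp
  next
    case 3
    have "take (length (subst_word c U)) (drop (q - length (chi c v)) (subst_word c V)) = subst_word c U"
      using Cons.prems(6) 3 by simp
    then obtain t where t: "q - length (chi c v) = length (subst_word c (take t V))"
      "take (length U) (drop t V) = U"
      using Cons.IH[OF Cons.prems(1,2) _ Cons.prems(4,5)] Cons.prems(3) by auto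
    show ?thesis
      by (rule exI[of _ "Suc t"]) (use t 3 in simp)
  qed
qed

context kpos begin

lemma last_sig: "1 \<le> j \<Longrightarrow> abc w \<Longrightarrow> w \<noteq> [] \<Longrightarrow> last w \<in> {1,2} \<Longrightarrow> last (sig k j d w) \<in> {1,2}"
proof (induction d arbitrary: j)
  case 0 then show ?case by simp
next
  case (Suc d)
  have "last (sig k (Suc j) d w) \<in> {1,2}" using Suc by simp
  moreover have "sig k (Suc j) d w \<noteq> []" using sig_ne Suc.prems by simp
  moreover have "1 \<le> k j" using kp Suc.prems by simp
  ultimately show ?case using last_subst by simp
qed

lemma recog:
  assumes "1 \<le> j" "abc w" "abc V" "w \<noteq> []" "last w \<in> {1,2}"
    "take (length (sig k j d w)) (drop q (sig k j d V)) = sig k j d w"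
  shows "\<exists>t. q = length (sig k j d (take t V)) \<and> take (length w) (drop t V) = w"
  using assms
proof (induction d arbitrary: j q)
  case 0
  then have "q < length V" by (cases "q < length V") auto
  then show ?case using 0 by (intro exI[of _ q]) simp
next
  case (Suc d)
  define U where "U = sig k (Suc j) d w"
  define V1 where "V1 = sig k (Suc j) d V"
  have U: "abc U" "U \<noteq> []" "last U \<in> {1,2}" "abc V1"
    using Suc.prems abc_sig sig_ne last_sig by (auto simp: U_def V1_def)
  have "take (length (subst_word (k j) U)) (drop q (subst_word (k j) V1)) = subst_word (k j) U"
    using Suc.prems(6) by (simp add: U_def V1_def)
  then obtain t1 where t1: "q = length (subst_word (k j) (take t1 V1))" "take (length U) (drop t1 V1) = U"
    using recog1[of "k j" U V1 q] U kp Suc.prems(1) by auto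
  obtain t where t: "t1 = length (sig k (Suc j) d (take t V))" "take (length w) (drop t V) = w"
    using Suc.IH[of "Suc j" t1] Suc.prems t1(2) by (auto simp: U_def V1_def)
  have "V1 = sig k (Suc j) d (take t V) @ sig k (Suc j) d (drop t V)"
    unfolding V1_def by (metis append_take_drop_id sig_append)
  then have "take t1 V1 = sig k (Suc j) d (take t V)" using t(1) by simp
  then show ?case using t1 t by (intro exI[of _ t]) simp
qed

end



lemma len_take_mono: "t' \<le> t \<Longrightarrow> length (sig k j d (take t' V)) \<le> length (sig k j d (take t V))"
proof -
  assume "t' \<le> t"
  then have "take t V = take t' V @ drop t' (take t V)" by (metis append_take_drop_id take_take min_absorb1)
  then have "sig k j d (take t V) = sig k j d (take t' V) @ sig k j d (drop t' (take t V))"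
    by (metis sig_append)
  then show ?thesis by simp
qed

lemma len3_big:
  assumes "infinite_type_coding k"
  shows "\<exists>D'\<ge>D0. N < length (sig k 1 (d + D') [3])"
proof -
  obtain D where D: "N < length (sig k 1 D [3])" using len3_unbounded[OF assms] by blast
  have "length (sig k 1 D [3]) \<le> length (sig k 1 (d + (D + D0)) [3])" by (rule len3_mono) simp
  then show ?thesis using D by (intro exI[of _ "D + D0"]) simp
qed

lemma P_eq: "sig k 1 (d + D') [3] = sig k 1 d (sig k (Suc d) D' [3])"
  by (rule sig_comp') auto

lemma witness:
  assumes itc: "infinite_type_coding k" and LR: "rhoLR k L"
    and w: "w \<noteq> []" "abc w" "last w \<in> {1,2}" and t: "1 \<le> t"
    and H: "\<forall>D'\<ge>D0. take (length w) (drop t (sig k (Suc d) D' [3])) = w \<and>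
      (\<forall>t'>t. take (length w) (drop t' (sig k (Suc d) D' [3])) = w \<longrightarrow>
        length (sig k 1 d (take t (sig k (Suc d) D' [3]))) + L * length (sig k 1 d w)
          < length (sig k 1 d (take t' (sig k (Suc d) D' [3]))))"
  shows False
proof -
  interpret kpos k using itc_kpos[OF itc] .
  define V0 where "V0 = sig k (Suc d) D0 [3]"
  have abcV0: "abc V0" unfolding V0_def by (rule abc_sig) simp
  have wV0: "take (length w) (drop t V0) = w" using H V0_def by auto
  have tV0: "t + length w \<le> length V0"
  proof (rule ccontr)
    assume "\<not> t + length w \<le> length V0"
    then have "length (take (length w) (drop t V0)) < length w" using w(1) by (cases w) (auto simp: min_def)
    then show False using wV0 by simp
  qed
  define p where "p = length (sig k 1 d (take t V0))"
  define n where "n = length (sig k 1 d w)"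
  have n1: "1 \<le> n" unfolding n_def using sig_ne[of 1 w d] w by (cases "sig k 1 d w") auto
  have tne: "take t V0 \<noteq> []" using t tV0 w by (cases V0) auto
  have p1: "1 \<le> p" unfolding p_def using sig_ne[of 1 "take t V0" d] tne abc_take[OF abcV0]
    by (cases "sig k 1 d (take t V0)") auto
  have V0split: "V0 = take t V0 @ w @ drop (t + length w) V0"
    using wV0 by (metis append_take_drop_id drop_drop add.commute)
  define P0 where "P0 = sig k 1 (d + D0) [3]"
  have P0eq: "P0 = sig k 1 d (take t V0) @ sig k 1 d w @ sig k 1 d (drop (t + length w) V0)"
    unfolding P0_def P_eq V0_def[symmetric] by (subst V0split) simp
  have rho_p: "\<And>m. m < n \<Longrightarrow> rho k (p + m) = sig k 1 d w ! m"
  proof -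
    fix m assume "m < n"
    then have "p + m < length P0" using P0eq by (simp add: p_def n_def)
    then have "rho k (p + m) = P0 ! (p + m)" using rho_nth[OF itc] unfolding P0_def by blast
    also have "\<dots> = sig k 1 d w ! m" using P0eq \<open>m < n\<close> by (simp add: p_def n_def nth_append)
    finally show "rho k (p + m) = sig k 1 d w ! m" .
  qed
  obtain j where j: "p < j" "j \<le> p + L * n" "\<forall>m<n. rho k (j + m) = rho k (p + m)"
  proof -
    have "\<exists>j. p < j \<and> j \<le> p + L * n \<and> (\<forall>m<n. rho k (j + m) = rho k (p + m))"
      using LR p1 n1 unfolding rhoLR_def by simp
    then show ?thesis using that by blast
  qed
  obtain D' where D': "D' \<ge> D0" "j + n < length (sig k 1 (d + D') [3])"
    using len3_big[OF itc] by blast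
  define V where "V = sig k (Suc d) D' [3]"
  define P where "P = sig k 1 (d + D') [3]"
  have abcV: "abc V" unfolding V_def by (rule abc_sig) simp
  have PV: "P = sig k 1 d V" unfolding P_def V_def by (rule P_eq)
  obtain r where r: "V = V0 @ r" unfolding V_def V0_def using sig3_prefix'[OF D'(1)] by blast
  have tV: "take t V = take t V0" using r tV0 by simp
  have occ: "take (length (sig k 1 d w)) (drop j (sig k 1 d V)) = sig k 1 d w"
  proof (rule nth_equalityI)
    show "length (take (length (sig k 1 d w)) (drop j (sig k 1 d V))) = length (sig k 1 d w)"
      using D'(2) PV P_def by (simp add: n_def)
    fix m assume "m < length (take (length (sig k 1 d w)) (drop j (sig k 1 d V)))"
    then have m: "m < n" "j + m < length P" using D'(2) PV P_def by (auto simp: n_def)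
    have "take (length (sig k 1 d w)) (drop j (sig k 1 d V)) ! m = P ! (j + m)"
      using m PV by (simp add: n_def)
    also have "\<dots> = rho k (j + m)" using rho_nth[OF itc m(2)[unfolded P_def]] P_def by simp
    also have "\<dots> = rho k (p + m)" using j m by simp
    also have "\<dots> = sig k 1 d w ! m" using rho_p m by simp
    finally show "take (length (sig k 1 d w)) (drop j (sig k 1 d V)) ! m = sig k 1 d w ! m" .
  qed
  obtain t' where t': "j = length (sig k 1 d (take t' V))" "take (length w) (drop t' V) = w"
    using recog[OF _ w(2) abcV w(1) w(3) occ] by auto
  have "t < t'"
  proof (rule ccontr)
    assume "\<not> t < t'"
    then have "length (sig k 1 d (take t' V)) \<le> length (sig k 1 d (take t V))" by (intro len_take_mono) simp
    then show False using t' j tV p_def by simp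
  qed
  then have "length (sig k 1 d (take t V)) + L * n < j"
    using H D'(1) t' unfolding V_def n_def by auto
  then show False using j tV p_def by simp
qed



lemma len_sig_rep: "length (sig k j d (replicate r c)) = r * length (sig k j d [c])"
  by (induction r) (simp, subst replicate_Suc, subst length_sig_Cons, simp)

lemma len_cons_rep: "length (sig k j d (a # replicate r c)) = length (sig k j d [a]) + r * length (sig k j d [c])"
  using length_sig_Cons[of k j d a "replicate r c"] len_sig_rep[of k j d r c] by simp

lemma le_mult_k: "2 \<le> x \<Longrightarrow> (b::nat) \<le> (x - 1) * b"
proof -
  assume "2 \<le> x"
  then obtain x' where "x = Suc (Suc x')" by (metis add_2_eq_Suc le_Suc_ex)
  then show ?thesis by simp
qed

context kpos begin

definition al where "al d = length (sig k 1 d [3])"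
definition bl where "bl d = length (sig k 1 d [1])"

lemma al_pos: "1 \<le> al d" unfolding al_def using sig_len_pos[of 1 3 d] by simp
lemma bl_pos: "1 \<le> bl d" unfolding bl_def using sig_len_pos[of 1 1 d] by simp

lemma len2: "length (sig k 1 d [2]) = bl (Suc d)"
proof -
  have "sig k 1 (Suc d) [1] = sig k 1 d (subst_word (k (1 + d)) [1])" by (rule sig_Suc_inner)
  then show ?thesis unfolding bl_def by simp
qed

lemma al_Suc: "al (Suc d) = al d + (k (Suc d) - 1) * bl d"
proof -
  have "sig k 1 (Suc d) [3] = sig k 1 d (subst_word (k (1 + d)) [3])" by (rule sig_Suc_inner)
  also have "\<dots> = sig k 1 d (3 # replicate (k (Suc d) - 1) 1)" by simp
  finally show ?thesis unfolding al_def bl_def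
    by (simp only: len_cons_rep)
qed

lemma bl_SS: "bl (Suc (Suc d)) = al (Suc d) + bl d"
proof -
  have "sig k 1 (Suc d) [2] = sig k 1 d (subst_word (k (1 + d)) [2])" by (rule sig_Suc_inner)
  also have "\<dots> = sig k 1 d (3 # replicate (k (Suc d)) 1)" by simp
  finally have "bl (Suc (Suc d)) = al d + k (Suc d) * bl d" unfolding al_def bl_def
    using len2[of "Suc d"] by (simp only: len_cons_rep bl_def)
  moreover have "1 \<le> k (Suc d)" using kp by simp
  then obtain k' where "k (Suc d) = Suc k'" by (cases "k (Suc d)") auto
  ultimately show ?thesis using al_Suc[of d] by simp
qed

lemma al_mono: "d \<le> d' \<Longrightarrow> al d \<le> al d'"
  unfolding al_def by (rule len3_mono)

lemma bl_Suc_mono: "bl d \<le> bl (Suc d) \<and> bl (Suc d) \<le> bl (Suc (Suc d))"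
proof (induction d)
  case 0
  have "bl 0 = 1" "bl 1 = 1" by (simp_all add: bl_def)
  then show ?case using bl_SS[of 0] al_pos[of 1] by simp
next
  case (Suc d)
  have "bl (Suc (Suc (Suc d))) = al (Suc (Suc d)) + bl (Suc d)" by (rule bl_SS)
  moreover have "al (Suc d) \<le> al (Suc (Suc d))" by (rule al_mono) simp
  ultimately show ?case using Suc bl_SS[of d] by simp
qed

lemma bl_mono: "d \<le> d' \<Longrightarrow> bl d \<le> bl d'"
proof -
  assume "d \<le> d'"
  have "\<And>n. bl n \<le> bl (Suc n)" using bl_Suc_mono by blast
  then show ?thesis using lift_Suc_mono_le[of bl d d'] \<open>d \<le> d'\<close> by blast
qed

lemma al_le_bl: "al d \<le> bl (Suc d)"
proof (cases d)
  case 0 then show ?thesis by (simp add: al_def bl_def)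
next
  case (Suc d') then show ?thesis using bl_SS[of d'] by simp
qed

lemma bl_le_2al: "1 \<le> a \<Longrightarrow> 2 \<le> k a \<Longrightarrow> bl (Suc a) \<le> 2 * al a"
proof -
  assume a: "1 \<le> a" "2 \<le> k a"
  obtain a' where a': "a = Suc a'" using a by (cases a) auto
  have "bl (Suc a) = al a + bl a'" using bl_SS[of a'] a' by simp
  moreover have "al a = al a' + (k a - 1) * bl a'" using al_Suc[of a'] a' by simp
  moreover have "bl a' \<le> (k a - 1) * bl a'" using a le_mult_k by blast
  ultimately show ?thesis by linarith
qed

lemma al_ge_bl: "1 \<le> a \<Longrightarrow> 2 \<le> k a \<Longrightarrow> bl (a - 1) \<le> al a"
proof -
  assume a: "1 \<le> a" "2 \<le> k a"
  obtain a' where a': "a = Suc a'" using a by (cases a) auto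
  have "al a = al a' + (k a - 1) * bl a'" using al_Suc[of a'] a' by simp
  moreover have "bl a' \<le> (k a - 1) * bl a'" using a le_mult_k by blast
  ultimately show ?thesis using a' by (simp only: diff_Suc_1)
qed

lemma bl_growth2: "i * al j0 \<le> bl (j0 + 2 * i) \<and> i * al j0 \<le> bl (j0 + 2 * i + 1)"
proof (induction i)
  case 0 then show ?case by simp
next
  case (Suc i)
  have "bl (j0 + 2 * Suc i) = al (j0 + 2 * i + 1) + bl (j0 + 2 * i)"
    using bl_SS[of "j0 + 2 * i"] by simp
  moreover have "bl (j0 + 2 * Suc i + 1) = al (j0 + 2 * i + 2) + bl (j0 + 2 * i + 1)"
    using bl_SS[of "j0 + 2 * i + 1"] by simp
  moreover have "al j0 \<le> al (j0 + 2 * i + 1)" "al j0 \<le> al (j0 + 2 * i + 2)" by (auto intro: al_mono)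
  ultimately show ?case using Suc by simp
qed

lemma bl_growth: "j0 \<le> e \<Longrightarrow> ((e - j0) div 2) * al j0 \<le> bl e"
proof -
  assume "j0 \<le> e"
  then consider "e = j0 + 2 * ((e - j0) div 2)" | "e = j0 + 2 * ((e - j0) div 2) + 1" by linarith
  then show ?thesis using bl_growth2[of "(e - j0) div 2" j0] by cases simp_all
qed

end



lemma blocks:
  assumes "\<forall>c\<in>set U. Z \<inter> set (f c) \<noteq> {} \<longrightarrow> (\<exists>R z. f c = R @ [z] \<and> Z \<inter> set R = {} \<and> Q R)"
    "t' < length (concat (map f U))" "concat (map f U) ! t' \<in> Z"
  shows "\<exists>Y R. take t' (concat (map f U)) = Y @ R \<and> Q R \<and> Z \<inter> set R = {}"
  using assms
proof (induction U arbitrary: t')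
  case Nil then show ?case by simp
next
  case (Cons u U)
  show ?case
  proof (cases "t' < length (f u)")
    case True
    then have "f u ! t' \<in> Z" using Cons.prems(3) by (simp add: nth_append)
    then have "Z \<inter> set (f u) \<noteq> {}" using True nth_mem by blast
    then obtain R z where Rz: "f u = R @ [z]" "Z \<inter> set R = {}" "Q R" using Cons.prems(1) by auto
    have "t' = length R"
    proof (rule ccontr)
      assume "t' \<noteq> length R"
      then have "t' < length R" using True Rz by simp
      then have "f u ! t' \<in> set R" using Rz by (simp add: nth_append)
      then show False using \<open>f u ! t' \<in> Z\<close> Rz by blast
    qed
    then have "take t' (concat (map f (u # U))) = [] @ R" using Rz by simp
    then show ?thesis using Rz by blast
  next
    case False
    have "t' - length (f u) < length (concat (map f U))" using Cons.prems(2) False by simp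
    moreover have "concat (map f U) ! (t' - length (f u)) \<in> Z" using Cons.prems(3) False by (simp add: nth_append)
    moreover have "\<forall>c\<in>set U. Z \<inter> set (f c) \<noteq> {} \<longrightarrow> (\<exists>R z. f c = R @ [z] \<and> Z \<inter> set R = {} \<and> Q R)"
      using Cons.prems(1) by simp
    ultimately obtain Y R where YR: "take (t' - length (f u)) (concat (map f U)) = Y @ R" "Q R" "Z \<inter> set R = {}"
      using Cons.IH by blast
    have "take t' (concat (map f (u # U))) = (f u @ Y) @ R" using YR False by simp
    then show ?thesis using YR by blast
  qed
qed

context kpos begin

lemma gap_single:
  assumes itc: "infinite_type_coding k" and LR: "rhoLR k L"
    and Z: "Z \<subseteq> {1,2}" and t: "1 \<le> t" "t < length (sig k (Suc d) D0 [3])"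
    and y: "sig k (Suc d) D0 [3] ! t = y" "y \<in> Z"
    and S: "\<forall>D'\<ge>D0. \<exists>f (U::nat list). sig k (Suc d) D' [3] = concat (map f U) \<and>
       (\<forall>c\<in>set U. Z \<inter> set (f c) \<noteq> {} \<longrightarrow> (\<exists>R z. f c = R @ [z] \<and> Z \<inter> set R = {} \<and>
           L * length (sig k 1 d [y]) \<le> length (sig k 1 d R)))"
  shows False
proof (rule witness[OF itc LR, of "[y]" t D0 d])
  show "[y] \<noteq> []" "abc [y]" "last [y] \<in> {1,2}" "1 \<le> t" using Z y t by auto
  show "\<forall>D'\<ge>D0. take (length [y]) (drop t (sig k (Suc d) D' [3])) = [y] \<and>
      (\<forall>t'>t. take (length [y]) (drop t' (sig k (Suc d) D' [3])) = [y] \<longrightarrow>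
        length (sig k 1 d (take t (sig k (Suc d) D' [3]))) + L * length (sig k 1 d [y])
          < length (sig k 1 d (take t' (sig k (Suc d) D' [3]))))"
  proof (intro allI impI conjI)
    fix D' assume D': "D0 \<le> D'"
    define V where "V = sig k (Suc d) D' [3]"
    have abcV: "abc V" unfolding V_def by (rule abc_sig) simp
    obtain r where r: "V = sig k (Suc d) D0 [3] @ r" unfolding V_def using sig3_prefix'[OF D'] by blast
    have Vt: "t < length V" "V ! t = y" using r t y by (auto simp: nth_append)
    then show "take (length [y]) (drop t (sig k (Suc d) D' [3])) = [y]"
      unfolding V_def[symmetric] by (simp add: take_Suc_conv_app_nth hd_drop_conv_nth)
    fix t' assume tt: "t < t'" and occ: "take (length [y]) (drop t' (sig k (Suc d) D' [3])) = [y]"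
    then have t'V: "t' < length V" "V ! t' = y" unfolding V_def[symmetric]
      by (cases "t' < length V"; simp add: hd_drop_conv_nth take_Suc_conv_app_nth)+
    have "\<exists>f (U::nat list). V = concat (map f U) \<and>
       (\<forall>c\<in>set U. Z \<inter> set (f c) \<noteq> {} \<longrightarrow> (\<exists>R z. f c = R @ [z] \<and> Z \<inter> set R = {} \<and>
           L * length (sig k 1 d [y]) \<le> length (sig k 1 d R)))"
      using S D' unfolding V_def by (elim allE[of _ D']) simp
    then obtain f and U :: "nat list" where fU: "V = concat (map f U)"
      "\<forall>c\<in>set U. Z \<inter> set (f c) \<noteq> {} \<longrightarrow> (\<exists>R z. f c = R @ [z] \<and> Z \<inter> set R = {} \<and>
           L * length (sig k 1 d [y]) \<le> length (sig k 1 d R))"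
      by blast
    obtain Y R where YR: "take t' V = Y @ R" "L * length (sig k 1 d [y]) \<le> length (sig k 1 d R)" "Z \<inter> set R = {}"
      using blocks[of U Z f "\<lambda>R. L * length (sig k 1 d [y]) \<le> length (sig k 1 d R)" t'] fU t'V y(2)
      by auto
    have tY: "t < length Y"
    proof (rule ccontr)
      assume "\<not> t < length Y"
      have "take t' V ! t = V ! t" using tt by simp
      also have "\<dots> = y" using Vt by simp
      finally have "(Y @ R) ! t = y" using YR by simp
      moreover have "t - length Y < length R"
      proof -
        have "length (take t' V) = t'" using t'V by simp
        then have "length Y + length R = t'" using YR(1) by (metis length_append)
        then show ?thesis using tt \<open>\<not> t < length Y\<close> by linarith
      qed
      ultimately have "y \<in> set R" using \<open>\<not> t < length Y\<close> by (simp add: nth_append) (metis nth_mem)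
      then show False using YR y by blast
    qed
    have Yeq: "Y = take t V @ drop t Y"
    proof -
      have "take t Y = take t (take t' V)" using YR tY by simp
      also have "\<dots> = take t V" using tt by simp
      finally show ?thesis by (metis append_take_drop_id)
    qed
    have abcY: "abc (drop t Y)"
    proof -
      have "abc (take t' V)" using abc_take abcV by blast
      then show ?thesis using YR by (simp add: abc_drop)
    qed
    have "drop t Y \<noteq> []" using tY by simp
    then have "1 \<le> length (sig k 1 d (drop t Y))"
      using sig_ne[of 1 "drop t Y" d] abcY by (cases "sig k 1 d (drop t Y)") auto
    moreover have "sig k 1 d (take t' V) = sig k 1 d (take t V) @ sig k 1 d (drop t Y) @ sig k 1 d R"
      using YR(1) Yeq by (metis sig_append append.assoc)
    ultimately show "length (sig k 1 d (take t (sig k (Suc d) D' [3]))) + L * length (sig k 1 d [y])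
          < length (sig k 1 d (take t' (sig k (Suc d) D' [3])))"
      unfolding V_def[symmetric] using YR(2) by simp
  qed
qed

end



lemma all_letters_inf:
  assumes itc: "infinite_type_coding k" and j: "1 \<le> j"
  shows "\<exists>D0. \<forall>D\<ge>D0. {1,2,3} \<subseteq> set (sig k j D [3])"
proof -
  interpret kpos k using itc_kpos[OF itc] .
  have io: "infinite {i. i \<ge> 1 \<and> k (2 * i - 1) > 1}" and ie: "infinite {i. i \<ge> 1 \<and> k (2 * i) > 1}"
    using itc by (auto simp: infinite_type_coding_def)
  have "\<exists>n>j. n \<in> {i. i \<ge> 1 \<and> k (2 * i - 1) > 1}" using io infinite_nat_iff_unbounded by blast
  then obtain i where i: "i > j" "i \<ge> 1" "k (2 * i - 1) > 1" by auto
  have "\<exists>n>i. n \<in> {i. i \<ge> 1 \<and> k (2 * i) > 1}" using ie infinite_nat_iff_unbounded by blast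
  then obtain i' where i': "i' > i" "i' \<ge> 1" "k (2 * i') > 1" by auto
  define a2 where "a2 = 2 * i - 1"
  define a1 where "a1 = 2 * i'"
  have "odd (a1 - a2)"
  proof -
    have "a1 - a2 = 2 * (i' - i) + 1" using i i' by (simp add: a1_def a2_def)
    then show ?thesis by simp
  qed
  moreover have "j \<le> a2" "a2 < a1" "2 \<le> k a1" "2 \<le> k a2" using i i' by (auto simp: a1_def a2_def)
  ultimately show ?thesis using all_letters[OF j] by (intro exI[of _ "a1 + 3"]) auto
qed

lemma sig3_hd0: "sig k j d [3] ! 0 = 3"
  using sig3_Cons[of k j d] by auto

lemma subst_rep1: "subst_word c (replicate K (Suc 0)) = replicate K 2"
  by (induction K) auto

lemma sig_two_rep3: "k a = 1 \<Longrightarrow> k (Suc a) = 1 \<Longrightarrow> sig k a 2 (replicate i 3) = replicate i 3"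
  by (induction i) (auto simp: sig_two)

lemma Q1struct:
  "(\<forall>l<2 * i. k (a + l) = 1) \<Longrightarrow> sig k a (2 * i) [3] = [3] \<and>
     sig k a (2 * i) [1] = replicate i 3 @ [1] \<and> sig k a (2 * i) [2] = replicate i 3 @ [2]"
proof (induction i arbitrary: a)
  case 0 then show ?case by simp
next
  case (Suc i)
  have IH: "sig k (a + 2) (2 * i) [3] = [3] \<and>
     sig k (a + 2) (2 * i) [1] = replicate i 3 @ [1] \<and> sig k (a + 2) (2 * i) [2] = replicate i 3 @ [2]"
  proof -
    have "\<forall>l<2 * i. k (a + 2 + l) = 1"
    proof (intro allI impI)
      fix l assume "l < 2 * i"
      then have "2 + l < 2 * Suc i" by simp
      then have "k (a + (2 + l)) = 1" using Suc.prems by blast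
      then show "k (a + 2 + l) = 1" by (simp add: add.assoc)
    qed
    then show ?thesis using Suc.IH[of "a + 2"] by blast
  qed
  have ka: "k a = 1" "k (Suc a) = 1" using Suc.prems by auto
  have e: "\<And>W. sig k a (2 * Suc i) W = sig k a 2 (sig k (a + 2) (2 * i) W)"
    by (rule sig_comp') auto
  have r: "sig k a 2 (replicate i 3) = replicate i 3" using sig_two_rep3 ka by blast
  show ?case using IH ka r by (simp add: e sig_two replicate_app_Cons_same)
qed

context kpos begin

lemma Qfree: "abc W \<Longrightarrow> 2 \<notin> set W \<Longrightarrow> k (Suc a) = 1 \<Longrightarrow> 2 \<notin> set (sig k a 2 W)"
proof -
  assume a: "abc W" "2 \<notin> set W" "k (Suc a) = 1"
  have "set W \<subseteq> {1,3}" using a by (auto simp: abc_def)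
  then have "set (subst_word (k (Suc a)) W) \<subseteq> {2,3}" using a(3) by (auto simp: set_subst)
  then have "set (subst_word (k a) (subst_word (k (Suc a)) W)) \<subseteq> {1,3}" by (auto simp: set_subst)
  then show ?thesis by (auto simp: sig_two)
qed

lemma Qstruct:
  "(\<forall>i<m. k (a + 2 * i + 1) = 1) \<Longrightarrow> 2 \<notin> set (sig k a (2 * m) [1]) \<and> 2 \<notin> set (sig k a (2 * m) [3]) \<and>
     (\<exists>R. sig k a (2 * m) [2] = R @ [2] \<and> 2 \<notin> set R \<and> abc R \<and>
        (1 \<le> m \<longrightarrow> (\<exists>R'. R = sig k a (2 * m - 2) [3] @ R')))"
proof (induction m arbitrary: a)
  case 0 then show ?case by simp
next
  case (Suc m)
  have hyp: "\<forall>i<m. k (a + 2 + 2 * i + 1) = 1"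
  proof (intro allI impI)
    fix i assume "i < m"
    then have "k (a + 2 * Suc i + 1) = 1" using Suc.prems by blast
    then show "k (a + 2 + 2 * i + 1) = 1" by (simp add: algebra_simps)
  qed
  have ka: "k (Suc a) = 1" using Suc.prems by (metis add.right_neutral mult_0_right zero_less_Suc Suc_eq_plus1)
  obtain R where R: "sig k (a + 2) (2 * m) [2] = R @ [2]" "2 \<notin> set R" "abc R"
      "1 \<le> m \<longrightarrow> (\<exists>R'. R = sig k (a + 2) (2 * m - 2) [3] @ R')"
    and f1: "2 \<notin> set (sig k (a + 2) (2 * m) [1])" and f3: "2 \<notin> set (sig k (a + 2) (2 * m) [3])"
    using Suc.IH[OF hyp] by blast
  have e: "\<And>W. sig k a (2 * Suc m) W = sig k a 2 (sig k (a + 2) (2 * m) W)"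
    by (rule sig_comp') auto
  have abc1: "abc (sig k (a + 2) (2 * m) [1])" "abc (sig k (a + 2) (2 * m) [3])" by (auto intro: abc_sig)
  have p1: "2 \<notin> set (sig k a (2 * Suc m) [1])" unfolding e using Qfree[OF abc1(1) f1 ka] .
  have p3: "2 \<notin> set (sig k a (2 * Suc m) [3])" unfolding e using Qfree[OF abc1(2) f3 ka] .
  define Rn where "Rn = sig k a 2 R @ (3 # replicate (k a - 1) 1)"
  have two: "sig k a 2 [2] = (3 # replicate (k a - 1) 1) @ [2]" using ka by (simp add: sig_two)
  have eq2: "sig k a (2 * Suc m) [2] = Rn @ [2]" unfolding e R(1) Rn_def using two by simp
  have nf: "2 \<notin> set Rn" unfolding Rn_def using Qfree[OF R(3) R(2) ka] by auto
  have ab: "abc Rn" unfolding Rn_def using R(3) by (auto intro: abc_sig)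
  have pre: "\<exists>R'. Rn = sig k a (2 * Suc m - 2) [3] @ R'"
  proof (cases m)
    case 0
    then have "R = []" using R(1) by simp
    then show ?thesis using 0 by (simp add: Rn_def)
  next
    case (Suc m')
    then obtain R' where R': "R = sig k (a + 2) (2 * m - 2) [3] @ R'" using R(4) by auto
    have "sig k a (2 * Suc m - 2) [3] = sig k a 2 (sig k (a + 2) (2 * m - 2) [3])"
      by (rule sig_comp') (use Suc in auto)
    then show ?thesis unfolding Rn_def R' by simp
  qed
  show ?case using p1 p3 eq2 nf ab pre by blast
qed

lemma sig_split: "D \<le> D' \<Longrightarrow> sig k j D' [3] = concat (map (\<lambda>c. sig k j D [c]) (sig k (j + D) (D' - D) [3]))"
proof -
  assume "D \<le> D'"
  have "sig k j D' [3] = sig k j D (sig k (j + D) (D' - D) [3])" by (rule sig_comp') (use \<open>D \<le> D'\<close> in auto)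
  then show ?thesis by (simp add: sig_concat[of k j D "sig k (j + D) (D' - D) [3]"])
qed

lemma exists_idx: "y \<in> set V \<Longrightarrow> V ! 0 = 3 \<Longrightarrow> y \<noteq> 3 \<Longrightarrow> \<exists>t. 1 \<le> t \<and> t < length V \<and> V ! t = y"
  by (metis in_set_conv_nth less_one not_less)

lemma caseBi:
  assumes itc: "infinite_type_coding k" and LR: "rhoLR k L"
    and j0: "1 \<le> j0" "2 \<le> k j0" and M: "3 \<le> M"
    and ones: "\<forall>l. 1 \<le> l \<and> l \<le> M - 1 \<longrightarrow> k (j0 + 2 * l) = 1"
    and dd: "j0 + M \<le> dd" "dd \<le> j0 + 2 * M - 4" "2 \<le> k dd"
    and LM: "2 * L + 1 \<le> (M - 1) div 2"
  shows False
proof -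
  define m where "m = M - 1"
  have hyp: "\<forall>i<m. k (Suc j0 + 2 * i + 1) = 1"
  proof (intro allI impI)
    fix i assume "i < m"
    then have "k (j0 + 2 * Suc i) = 1" using ones[rule_format, of "Suc i"] by (simp add: m_def)
    then show "k (Suc j0 + 2 * i + 1) = 1" by (simp add: algebra_simps)
  qed
  note Q = Qstruct[OF hyp]
  define f where "f = (\<lambda>c. sig k (Suc j0) (2 * m) [c])"
  obtain D1 where D1: "\<forall>D\<ge>D1. {1,2,3} \<subseteq> set (sig k (Suc j0 + 2 * m) D [3])"
    using all_letters_inf[OF itc, of "Suc j0 + 2 * m"] by auto
  define D0 where "D0 = 2 * m + D1"
  have V0: "sig k (Suc j0) D0 [3] = concat (map f (sig k (Suc j0 + 2 * m) D1 [3]))"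
    unfolding f_def D0_def using sig_split[of "2 * m" "2 * m + D1" "Suc j0"] by simp
  have "2 \<in> set (sig k (Suc j0 + 2 * m) D1 [3])" using D1 by auto
  moreover have "2 \<in> set (f 2)" using Q by (auto simp: f_def)
  ultimately have "2 \<in> set (sig k (Suc j0) D0 [3])" unfolding V0 by auto
  then obtain t where t: "1 \<le> t" "t < length (sig k (Suc j0) D0 [3])" "sig k (Suc j0) D0 [3] ! t = 2"
    using exists_idx sig3_hd0 by (metis numeral_eq_iff semiring_norm(89))
  obtain R0 where R0: "f 2 = R0 @ [2]" "2 \<notin> set R0" "\<exists>R'. R0 = sig k (Suc j0) (2 * m - 2) [3] @ R'"
    using Q M by (auto simp: f_def m_def)
  have bound: "L * length (sig k 1 j0 [2]) \<le> length (sig k 1 j0 R0)"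
  proof -
    obtain R' where R': "R0 = sig k (Suc j0) (2 * m - 2) [3] @ R'" using R0 by blast
    have "sig k 1 (j0 + (2 * m - 2)) [3] = sig k 1 j0 (sig k (Suc j0) (2 * m - 2) [3])"
      by (rule sig_comp') auto
    then have "al (j0 + (2 * m - 2)) \<le> length (sig k 1 j0 R0)" unfolding R' al_def by simp
    moreover have "al dd \<le> al (j0 + (2 * m - 2))" using dd M by (intro al_mono) (simp add: m_def)
    moreover have "bl (dd - 1) \<le> al dd" using al_ge_bl dd j0 by simp
    moreover have "((dd - 1 - j0) div 2) * al j0 \<le> bl (dd - 1)" using bl_growth[of j0 "dd - 1"] dd M by simp
    moreover have "(2 * L + 1) * al j0 \<le> ((dd - 1 - j0) div 2) * al j0"
    proof -
      have "(M - 1) div 2 \<le> (dd - 1 - j0) div 2" using dd by (intro div_le_mono) simp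
      then show ?thesis using LM by (intro mult_le_mono1) simp
    qed
    ultimately have c1: "(2 * L + 1) * al j0 \<le> length (sig k 1 j0 R0)" by linarith
    have "length (sig k 1 j0 [2]) \<le> 2 * al j0" using len2 bl_le_2al j0 by simp
    then have c2: "L * length (sig k 1 j0 [2]) \<le> L * (2 * al j0)" by (rule mult_le_mono2)
    have c3: "L * (2 * al j0) \<le> (2 * L + 1) * al j0" by (simp add: algebra_simps)
    show ?thesis using c1 c2 c3 by linarith
  qed
  show False
  proof (rule gap_single[OF itc LR _ t(1) t(2) t(3)])
    show "{2::nat} \<subseteq> {1,2}" by simp
    show "(2::nat) \<in> {2}" by simp
    show "\<forall>D'\<ge>D0. \<exists>f (U::nat list). sig k (Suc j0) D' [3] = concat (map f U) \<and>
       (\<forall>c\<in>set U. {2} \<inter> set (f c) \<noteq> {} \<longrightarrow> (\<exists>R z. f c = R @ [z] \<and> {2} \<inter> set R = {} \<and>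
           L * length (sig k 1 j0 [2]) \<le> length (sig k 1 j0 R)))"
    proof (intro allI impI)
      fix D' assume D': "D0 \<le> D'"
      define U where "U = sig k (Suc j0 + 2 * m) (D' - 2 * m) [3]"
      have VU: "sig k (Suc j0) D' [3] = concat (map f U)"
        unfolding f_def U_def using sig_split[of "2 * m" D' "Suc j0"] D' by (simp add: D0_def)
      have "\<forall>c\<in>set U. {2} \<inter> set (f c) \<noteq> {} \<longrightarrow> (\<exists>R z. f c = R @ [z] \<and> {2} \<inter> set R = {} \<and>
           L * length (sig k 1 j0 [2]) \<le> length (sig k 1 j0 R))"
      proof (intro ballI impI)
        fix c assume c: "c \<in> set U" "{2} \<inter> set (f c) \<noteq> {}"
        have "c \<in> {1,2,3}" using c abc_sig[of "[3]" k "Suc j0 + 2 * m" "D' - 2 * m"] unfolding U_def abc_def by auto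
        then have "c = 2" using c Q by (auto simp: f_def)
        then show "\<exists>R z. f c = R @ [z] \<and> {2} \<inter> set R = {} \<and> L * length (sig k 1 j0 [2]) \<le> length (sig k 1 j0 R)"
          using R0 bound by auto
      qed
      then show "\<exists>f (U::nat list). sig k (Suc j0) D' [3] = concat (map f U) \<and>
       (\<forall>c\<in>set U. {2} \<inter> set (f c) \<noteq> {} \<longrightarrow> (\<exists>R z. f c = R @ [z] \<and> {2} \<inter> set R = {} \<and>
           L * length (sig k 1 j0 [2]) \<le> length (sig k 1 j0 R)))" using VU by blast
    qed
  qed
qed

end



context kpos begin

lemma caseBii:
  assumes itc: "infinite_type_coding k" and LR: "rhoLR k L"
    and c0: "1 \<le> c0" "2 \<le> k c0"
    and ones: "\<forall>l. 1 \<le> l \<and> l \<le> 2 * i \<longrightarrow> k (c0 + l) = 1"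
    and Li: "2 * L \<le> i"
  shows False
proof -
  have hyp: "\<forall>l<2 * i. k (Suc c0 + l) = 1"
  proof (intro allI impI)
    fix l assume "l < 2 * i"
    then show "k (Suc c0 + l) = 1" using ones[rule_format, of "Suc l"] by simp
  qed
  note Q = Q1struct[OF hyp]
  define f where "f = (\<lambda>c. sig k (Suc c0) (2 * i) [c])"
  obtain D1 where D1: "\<forall>D\<ge>D1. {1,2,3} \<subseteq> set (sig k (Suc c0 + 2 * i) D [3])"
    using all_letters_inf[OF itc, of "Suc c0 + 2 * i"] by auto
  define D0 where "D0 = 2 * i + D1"
  have V0: "sig k (Suc c0) D0 [3] = concat (map f (sig k (Suc c0 + 2 * i) D1 [3]))"
    unfolding f_def D0_def using sig_split[of "2 * i" "2 * i + D1" "Suc c0"] by simp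
  have "2 \<in> set (sig k (Suc c0 + 2 * i) D1 [3])" using D1 by auto
  moreover have "2 \<in> set (f 2)" using Q by (auto simp: f_def)
  ultimately have "2 \<in> set (sig k (Suc c0) D0 [3])" unfolding V0 by auto
  then obtain t where t: "1 \<le> t" "t < length (sig k (Suc c0) D0 [3])" "sig k (Suc c0) D0 [3] ! t = 2"
    using exists_idx sig3_hd0 by (metis numeral_eq_iff semiring_norm(89))
  have bound: "L * length (sig k 1 c0 [2]) \<le> length (sig k 1 c0 (replicate i 3))"
  proof -
    have a: "length (sig k 1 c0 (replicate i 3)) = i * al c0" by (simp add: len_sig_rep al_def)
    have "length (sig k 1 c0 [2]) \<le> 2 * al c0" using len2 bl_le_2al c0 by simp
    then have "L * length (sig k 1 c0 [2]) \<le> L * (2 * al c0)" by (rule mult_le_mono2)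
    also have "\<dots> = (2 * L) * al c0" by simp
    also have "\<dots> \<le> i * al c0" using Li by (rule mult_le_mono1)
    finally show ?thesis using a by simp
  qed
  show False
  proof (rule gap_single[OF itc LR _ t(1) t(2) t(3)])
    show "{1,2::nat} \<subseteq> {1,2}" by simp
    show "(2::nat) \<in> {1,2}" by simp
    show "\<forall>D'\<ge>D0. \<exists>f (U::nat list). sig k (Suc c0) D' [3] = concat (map f U) \<and>
       (\<forall>c\<in>set U. {1,2} \<inter> set (f c) \<noteq> {} \<longrightarrow> (\<exists>R z. f c = R @ [z] \<and> {1,2} \<inter> set R = {} \<and>
           L * length (sig k 1 c0 [2]) \<le> length (sig k 1 c0 R)))"
    proof (intro allI impI)
      fix D' assume D': "D0 \<le> D'"
      define U where "U = sig k (Suc c0 + 2 * i) (D' - 2 * i) [3]"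
      have VU: "sig k (Suc c0) D' [3] = concat (map f U)"
        unfolding f_def U_def using sig_split[of "2 * i" D' "Suc c0"] D' by (simp add: D0_def)
      have "\<forall>c\<in>set U. {1,2} \<inter> set (f c) \<noteq> {} \<longrightarrow> (\<exists>R z. f c = R @ [z] \<and> {1,2} \<inter> set R = {} \<and>
           L * length (sig k 1 c0 [2]) \<le> length (sig k 1 c0 R))"
      proof (intro ballI impI)
        fix c assume c: "c \<in> set U" "{1,2} \<inter> set (f c) \<noteq> {}"
        have "c \<in> {1,2,3}" using c abc_sig[of "[3]" k "Suc c0 + 2 * i" "D' - 2 * i"] unfolding U_def abc_def by auto
        then have "c = 1 \<or> c = 2" using c Q by (auto simp: f_def)
        then have "f c = replicate i 3 @ [c]" using Q by (auto simp: f_def)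
        then show "\<exists>R z. f c = R @ [z] \<and> {1,2} \<inter> set R = {} \<and> L * length (sig k 1 c0 [2]) \<le> length (sig k 1 c0 R)"
          using bound by (intro exI[of _ "replicate i 3"] exI[of _ c]) auto
      qed
      then show "\<exists>f (U::nat list). sig k (Suc c0) D' [3] = concat (map f U) \<and>
       (\<forall>c\<in>set U. {1,2} \<inter> set (f c) \<noteq> {} \<longrightarrow> (\<exists>R z. f c = R @ [z] \<and> {1,2} \<inter> set R = {} \<and>
           L * length (sig k 1 c0 [2]) \<le> length (sig k 1 c0 R)))" using VU by blast
    qed
  qed
qed

lemma caseA:
  assumes itc: "infinite_type_coding k" and LR: "rhoLR k L"
    and a: "2 \<le> a" "2 * L < k a"
  shows False
proof -
  define d where "d = a - 2"
  have da: "Suc d = a - 1" "Suc (Suc d) = a" using a by (auto simp: d_def)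
  define K where "K = k a"
  have K1: "1 \<le> K" using a by (simp add: K_def)
  obtain D1 where D1: "\<forall>D\<ge>D1. {1,2,3} \<subseteq> set (sig k (a + 1) D [3])"
    using all_letters_inf[OF itc, of "a + 1"] by auto
  define V2 where "V2 = sig k (a + 1) D1 [3]"
  have "2 \<in> set V2" using D1 by (auto simp: V2_def)
  then obtain A2 B2 where AB: "V2 = A2 @ 2 # B2" by (meson split_list)
  have A2ne: "A2 \<noteq> []"
  proof
    assume "A2 = []"
    then have "V2 ! 0 = 2" using AB by simp
    then show False using sig3_hd0[of k "a + 1" D1] by (simp add: V2_def)
  qed
  have abcV2: "abc V2" unfolding V2_def by (rule abc_sig) simp
  then have abcA: "abc A2" "abc B2" using AB by auto
  define D0 where "D0 = D1 + 2"
  define V0 where "V0 = sig k (Suc d) D0 [3]"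
  have "V0 = sig k (Suc d) 2 V2" unfolding V0_def V2_def D0_def
    by (rule sig_comp') (use da in auto)
  also have "\<dots> = subst_word (k (Suc d)) (subst_word (k a) V2)" using da by (simp add: sig_two)
  finally have V0e: "V0 = subst_word (k (Suc d)) (subst_word (k a) A2) @ chi (k (Suc d)) 3 @
      replicate K 2 @ subst_word (k (Suc d)) (subst_word (k a) B2)"
    using AB by (simp add: K_def subst_rep1)
  define C3 where "C3 = chi (k (Suc d)) 3"
  define x where "x = last C3"
  define Pre' where "Pre' = subst_word (k (Suc d)) (subst_word (k a) A2) @ butlast C3"
  define Rest where "Rest = subst_word (k (Suc d)) (subst_word (k a) B2)"
  have C3ne: "C3 \<noteq> []" by (simp add: C3_def)
  have V0e2: "V0 = Pre' @ x # replicate K 2 @ Rest"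
    unfolding V0e Pre'_def x_def C3_def[symmetric] Rest_def using C3ne
    by (metis append.assoc append_butlast_last_id append_Cons append_Nil)
  have x13: "x = 1 \<or> x = 3" unfolding x_def C3_def by (cases "k (Suc d) - 1") auto
  have kd1: "1 \<le> k (Suc d)" using kp by simp
  have abcP: "abc Pre'"
  proof -
    have "abc V0" unfolding V0_def by (rule abc_sig) simp
    then show ?thesis using V0e2 by simp
  qed
  define t where "t = length Pre'"
  have t1: "1 \<le> t"
  proof -
    have "subst_word (k a) A2 \<noteq> []" using subst_ne'[OF abcA(1) A2ne] .
    moreover have "abc (subst_word (k a) A2)" by (rule abc_subst)
    ultimately have "subst_word (k (Suc d)) (subst_word (k a) A2) \<noteq> []" using subst_ne' by blast
    then show ?thesis unfolding t_def Pre'_def by (cases "subst_word (k (Suc d)) (subst_word (k a) A2)") auto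
  qed
  show False
  proof (rule witness[OF itc LR, of "[x, 2]" t D0 d])
    show "[x, 2] \<noteq> []" "abc [x, 2]" "last [x, 2] \<in> {1,2}" "1 \<le> t" using x13 t1 by auto
    show "\<forall>D'\<ge>D0. take (length [x, 2]) (drop t (sig k (Suc d) D' [3])) = [x, 2] \<and>
      (\<forall>t'>t. take (length [x, 2]) (drop t' (sig k (Suc d) D' [3])) = [x, 2] \<longrightarrow>
        length (sig k 1 d (take t (sig k (Suc d) D' [3]))) + L * length (sig k 1 d [x, 2])
          < length (sig k 1 d (take t' (sig k (Suc d) D' [3]))))"
    proof (intro allI impI conjI)
      fix D' assume D': "D0 \<le> D'"
      define V where "V = sig k (Suc d) D' [3]"
      obtain r where r: "V = V0 @ r" unfolding V_def V0_def using sig3_prefix'[OF D'] by blast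
      obtain K' where K': "K = Suc K'" using K1 by (cases K) auto
      have Ve: "V = Pre' @ x # 2 # replicate K' 2 @ Rest @ r" using r V0e2 K' by simp
      show "take (length [x, 2]) (drop t (sig k (Suc d) D' [3])) = [x, 2]"
        unfolding V_def[symmetric] Ve t_def by simp
      fix t' assume tt: "t < t'" and occ: "take (length [x, 2]) (drop t' (sig k (Suc d) D' [3])) = [x, 2]"
      have occ': "take (Suc (Suc 0)) (drop t' V) = [x, 2]" using occ unfolding V_def[symmetric] by simp
      have dne: "drop t' V \<noteq> []" using occ' by (metis list.distinct(1) take_Nil)
      then have Vt1: "t' < length V" by simp
      have "hd (take (Suc (Suc 0)) (drop t' V)) = hd (drop t' V)" using dne by (simp add: hd_take)
      then have "V ! t' = x" using occ' Vt1 by (simp add: hd_drop_conv_nth)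
      note Vt' = Vt1 this
      have far: "t + 1 + K \<le> t'"
      proof (rule ccontr)
        assume "\<not> t + 1 + K \<le> t'"
        then have "t' - t - 1 < K" "t < t'" using tt by auto
        then have "V ! t' = replicate K 2 ! (t' - t - 1)"
          using r V0e2 by (simp add: nth_append t_def)
        then have "V ! t' = 2" using \<open>t' - t - 1 < K\<close> by simp
        then show False using Vt' x13 by auto
      qed
      have pre: "take (t + 1 + K) V = Pre' @ x # replicate K 2"
        using r V0e2 by (simp add: t_def)
      have "length (sig k 1 d (take (t + 1 + K) V)) \<le> length (sig k 1 d (take t' V))"
        using far by (rule len_take_mono)
      moreover have "length (sig k 1 d (take (t + 1 + K) V)) =
          length (sig k 1 d Pre') + length (sig k 1 d [x]) + K * bl (Suc d)"
        unfolding pre using len_cons_rep[of k 1 d x K 2] len2[of d] by simp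
      moreover have "length (sig k 1 d (take t V)) = length (sig k 1 d Pre')" using r V0e2 by (simp add: t_def)
      moreover have "L * length (sig k 1 d [x, 2]) = L * (length (sig k 1 d [x]) + bl (Suc d))"
        using length_sig_Cons[of k 1 d x "[2]"] len2[of d] by simp
      moreover have "length (sig k 1 d [x]) \<le> bl (Suc d)"
        using x13 bl_mono[of d "Suc d"] al_le_bl[of d] by (auto simp: al_def bl_def)
      moreover have "1 \<le> bl (Suc d)" by (rule bl_pos)
      moreover have "L * (length (sig k 1 d [x]) + bl (Suc d)) < K * bl (Suc d)"
      proof -
        have "L * (length (sig k 1 d [x]) + bl (Suc d)) \<le> L * (2 * bl (Suc d))"
          using \<open>length (sig k 1 d [x]) \<le> bl (Suc d)\<close> by simp
        also have "\<dots> = (2 * L) * bl (Suc d)" by simp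
        also have "\<dots> < K * bl (Suc d)" using a bl_pos[of "Suc d"] by (simp add: K_def)
        finally show ?thesis .
      qed
      ultimately show "length (sig k 1 d (take t (sig k (Suc d) D' [3]))) + L * length (sig k 1 d [x, 2])
          < length (sig k 1 d (take t' (sig k (Suc d) D' [3])))"
        unfolding V_def[symmetric] by linarith
    qed
  qed
qed

end



lemma gaps_window:
  assumes inf: "infinite E" and ng: "\<not> bounded_gaps E"
  shows "\<exists>i0\<in>E. \<forall>i. i0 < i \<and> i \<le> i0 + M \<longrightarrow> i \<notin> E"
proof -
  obtain e0 where e0: "e0 \<in> E" using inf by (metis finite.emptyI ex_in_conv)
  obtain n where n: "\<forall>i\<in>E. \<not> (n < i \<and> i \<le> n + (M + e0))"
    using ng unfolding bounded_gaps_def by blast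
  have "e0 \<le> n" using n e0 by force
  define S where "S = {i\<in>E. i \<le> n}"
  have fS: "finite S" "S \<noteq> {}" using e0 \<open>e0 \<le> n\<close> by (auto simp: S_def)
  define i0 where "i0 = Max S"
  have i0: "i0 \<in> E" "i0 \<le> n" using Max_in[OF fS] by (auto simp: i0_def S_def)
  have "\<forall>i. i0 < i \<and> i \<le> i0 + M \<longrightarrow> i \<notin> E"
  proof (intro allI impI notI)
    fix i assume i: "i0 < i \<and> i \<le> i0 + M" and iE: "i \<in> E"
    show False
    proof (cases "i \<le> n")
      case True
      then have "i \<in> S" using iE by (simp add: S_def)
      then have "i \<le> i0" using Max_ge[OF fS(1)] by (simp add: i0_def)
      then show False using i by simp
    next
      case False
      then show False using n iE i i0 by force
    qed
  qed
  then show ?thesis using i0 by blast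
qed

context kpos begin

lemma caseB:
  assumes itc: "infinite_type_coding k" and LR: "rhoLR k L"
    and j0: "1 \<le> j0" "2 \<le> k j0"
    and ones: "\<forall>l. 1 \<le> l \<and> l \<le> 4 * L + 8 \<longrightarrow> k (j0 + 2 * l) = 1"
  shows False
proof -
  define M where "M = 4 * L + 8"
  show False
  proof (cases "\<exists>dd. j0 + M \<le> dd \<and> dd \<le> j0 + 2 * M - 4 \<and> 2 \<le> k dd")
    case True
    then obtain dd where dd: "j0 + M \<le> dd" "dd \<le> j0 + 2 * M - 4" "2 \<le> k dd" by blast
    show False
    proof (rule caseBi[OF itc LR j0 _ _ dd])
      show "3 \<le> M" by (simp add: M_def)
      show "\<forall>l. 1 \<le> l \<and> l \<le> M - 1 \<longrightarrow> k (j0 + 2 * l) = 1" using ones by (simp add: M_def)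
      show "2 * L + 1 \<le> (M - 1) div 2" by (simp add: M_def)
    qed
  next
    case False
    define S where "S = {c. c < j0 + M \<and> 2 \<le> k c}"
    have fS: "finite S" "S \<noteq> {}" using j0 by (auto simp: S_def M_def intro!: exI[of _ j0])
    define c0 where "c0 = Max S"
    have c0: "c0 \<in> S" using Max_in[OF fS] by (simp add: c0_def)
    have c0j: "j0 \<le> c0" using Max_ge[OF fS(1), of j0] j0 by (simp add: c0_def S_def M_def)
    show False
    proof (rule caseBii[OF itc LR _ _ _ order.refl])
      show "1 \<le> c0" using c0j j0 by simp
      show "2 \<le> k c0" using c0 by (simp add: S_def)
      show "\<forall>l. 1 \<le> l \<and> l \<le> 2 * (2 * L) \<longrightarrow> k (c0 + l) = 1"
      proof (intro allI impI)
        fix l assume l: "1 \<le> l \<and> l \<le> 2 * (2 * L)"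
        have k1: "1 \<le> k (c0 + l)" using kp l by simp
        have "\<not> 2 \<le> k (c0 + l)"
        proof
          assume k2: "2 \<le> k (c0 + l)"
          show False
          proof (cases "c0 + l < j0 + M")
            case True
            then have "c0 + l \<in> S" using k2 by (simp add: S_def)
            then have "c0 + l \<le> c0" using Max_ge[OF fS(1), of "c0 + l"] unfolding c0_def by blast
            then show False using l by simp
          next
            case F: False
            have "c0 < j0 + M" using c0 by (simp add: S_def)
            then have "c0 + l \<le> j0 + 2 * M - 4" using l by (simp add: M_def)
            then show False using False F k2 by force
          qed
        qed
        then show "k (c0 + l) = 1" using k1 by simp
      qed
    qed
  qed
qed

theorem forward:
  assumes itc: "infinite_type_coding k" and LR: "rhoLR k L"
  shows "(\<exists>B. \<forall>i\<ge>1. k i \<le> B) \<and> bounded_gaps {i. i \<ge> 1 \<and> k (2 * i) > 1}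
            \<and> bounded_gaps {i. i \<ge> 1 \<and> k (2 * i - 1) > 1}"
proof (intro conjI)
  show "\<exists>B. \<forall>i\<ge>1. k i \<le> B"
  proof (rule ccontr)
    assume "\<not> (\<exists>B. \<forall>i\<ge>1. k i \<le> B)"
    then obtain i where i: "1 \<le> i" "2 * L + k 1 < k i" by (meson not_le)
    then have "i \<noteq> 1" by auto
    then have "2 \<le> i" using i by simp
    moreover have "2 * L < k i" using i by simp
    ultimately show False using caseA[OF itc LR] by blast
  qed
  show "bounded_gaps {i. i \<ge> 1 \<and> k (2 * i) > 1}"
  proof (rule ccontr)
    assume ng: "\<not> bounded_gaps {i. i \<ge> 1 \<and> k (2 * i) > 1}"
    have inf: "infinite {i. i \<ge> 1 \<and> k (2 * i) > 1}" using itc by (simp add: infinite_type_coding_def)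
    obtain i0 where i0: "i0 \<in> {i. i \<ge> 1 \<and> k (2 * i) > 1}"
      "\<forall>i. i0 < i \<and> i \<le> i0 + (4 * L + 8) \<longrightarrow> i \<notin> {i. i \<ge> 1 \<and> k (2 * i) > 1}"
      using gaps_window[OF inf ng] by blast
    show False
    proof (rule caseB[OF itc LR, of "2 * i0"])
      show "1 \<le> 2 * i0" "2 \<le> k (2 * i0)" using i0 by auto
      show "\<forall>l. 1 \<le> l \<and> l \<le> 4 * L + 8 \<longrightarrow> k (2 * i0 + 2 * l) = 1"
      proof (intro allI impI)
        fix l assume l: "1 \<le> l \<and> l \<le> 4 * L + 8"
        then have "i0 + l \<notin> {i. i \<ge> 1 \<and> k (2 * i) > 1}" using i0(2)[rule_format, of "i0 + l"] by simp
        then have "\<not> k (2 * (i0 + l)) > 1" using l by simp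
        moreover have "1 \<le> k (2 * (i0 + l))" using kp l by simp
        ultimately show "k (2 * i0 + 2 * l) = 1" by (simp add: algebra_simps)
      qed
    qed
  qed
  show "bounded_gaps {i. i \<ge> 1 \<and> k (2 * i - 1) > 1}"
  proof (rule ccontr)
    assume ng: "\<not> bounded_gaps {i. i \<ge> 1 \<and> k (2 * i - 1) > 1}"
    have inf: "infinite {i. i \<ge> 1 \<and> k (2 * i - 1) > 1}" using itc by (simp add: infinite_type_coding_def)
    obtain i0 where i0: "i0 \<in> {i. i \<ge> 1 \<and> k (2 * i - 1) > 1}"
      "\<forall>i. i0 < i \<and> i \<le> i0 + (4 * L + 8) \<longrightarrow> i \<notin> {i. i \<ge> 1 \<and> k (2 * i - 1) > 1}"
      using gaps_window[OF inf ng] by blast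
    show False
    proof (rule caseB[OF itc LR, of "2 * i0 - 1"])
      show "1 \<le> 2 * i0 - 1" "2 \<le> k (2 * i0 - 1)" using i0 by auto
      show "\<forall>l. 1 \<le> l \<and> l \<le> 4 * L + 8 \<longrightarrow> k (2 * i0 - 1 + 2 * l) = 1"
      proof (intro allI impI)
        fix l assume l: "1 \<le> l \<and> l \<le> 4 * L + 8"
        then have "i0 + l \<notin> {i. i \<ge> 1 \<and> k (2 * i - 1) > 1}" using i0(2)[rule_format, of "i0 + l"] by simp
        then have "\<not> k (2 * (i0 + l) - 1) > 1" using l by simp
        moreover have "1 \<le> k (2 * (i0 + l) - 1)" proof (rule kp)
          show "1 \<le> 2 * (i0 + l) - 1" using l by arith
        qed
        moreover have "2 * (i0 + l) - 1 = 2 * i0 - 1 + 2 * l" using i0 l by simp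
        ultimately show "k (2 * i0 - 1 + 2 * l) = 1" by simp
      qed
    qed
  qed
qed

end



lemma len_mem: "e \<in> set W \<Longrightarrow> length (sig k j d [e]) \<le> length (sig k j d W)"
proof -
  assume "e \<in> set W"
  then obtain A C where "W = A @ e # C" by (meson split_list)
  then show ?thesis using length_sig_Cons[of k j d e C] by simp
qed

lemma len_chi_le: "length (chi c a) \<le> c + 1"
  by (simp add: chi.simps)

lemma len_subst_le: "length (subst_word c W) \<le> (c + 1) * length W"
proof (induction W)
  case Nil then show ?case by simp
next
  case (Cons a W)
  then show ?case using len_chi_le[of c a] by simp
qed

lemma Lbound:
  assumes "\<forall>i\<ge>1. k i \<le> B" "1 \<le> j"
  shows "length (sig k j d W) \<le> (B + 1) ^ d * length W"
  using assms(2)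
proof (induction d arbitrary: j)
  case 0 then show ?case by simp
next
  case (Suc d)
  have "length (sig k j (Suc d) W) \<le> (k j + 1) * length (sig k (Suc j) d W)"
    using len_subst_le by simp
  also have "\<dots> \<le> (B + 1) * ((B + 1) ^ d * length W)"
    using Suc assms(1) by (intro mult_le_mono) auto
  also have "\<dots> = (B + 1) ^ Suc d * length W" by (simp only: power_Suc mult.assoc)
  finally show ?case .
qed

lemma Lbound2: "(\<forall>e\<in>set W. length (sig k j d [e]) \<le> n) \<Longrightarrow> length (sig k j d W) \<le> n * length W"
proof (induction W)
  case Nil then show ?case by simp
next
  case (Cons a W)
  then show ?case using length_sig_Cons[of k j d a W] by simp
qed

lemma block_find:
  "pos < length (sig k j d U) \<Longrightarrow>
   \<exists>r<length U. length (sig k j d (take r U)) \<le> pos \<and> pos < length (sig k j d (take (Suc r) U))"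
proof (induction U arbitrary: pos)
  case Nil then show ?case by simp
next
  case (Cons u U)
  show ?case
  proof (cases "pos < length (sig k j d [u])")
    case True then show ?thesis by (intro exI[of _ 0]) simp
  next
    case False
    then have "pos - length (sig k j d [u]) < length (sig k j d U)"
      using Cons.prems length_sig_Cons[of k j d u U] by simp
    then obtain r where r: "r < length U" "length (sig k j d (take r U)) \<le> pos - length (sig k j d [u])"
      "pos - length (sig k j d [u]) < length (sig k j d (take (Suc r) U))" using Cons.IH by blast
    show ?thesis
      using r False length_sig_Cons[of k j d u "take r U"] length_sig_Cons[of k j d u "take (Suc r) U"]
      by (intro exI[of _ "Suc r"]) (simp, linarith)
  qed
qed

lemma len_take_Suc: "r < length U \<Longrightarrow>
  length (sig k j d (take (Suc r) U)) = length (sig k j d (take r U)) + length (sig k j d [U ! r])"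
  by (simp add: take_Suc_conv_app_nth)

lemma sig2_hd3: "y \<in> {1,2,3} \<Longrightarrow> \<exists>z. sig k j 2 [y] = 3 # z"
  by (auto simp: sig_two)

lemma drop_sig: "drop (length (sig k j d (take r U))) (sig k j d U) = sig k j d (drop r U)"
proof -
  have "sig k j d U = sig k j d (take r U) @ sig k j d (drop r U)" by (metis append_take_drop_id sig_append)
  then show ?thesis by (metis append_eq_conv_conj)
qed

lemma take_sig: "take (length (sig k j d (take r U))) (sig k j d U) = sig k j d (take r U)"
proof -
  have "sig k j d U = sig k j d (take r U) @ sig k j d (drop r U)" by (metis append_take_drop_id sig_append)
  then show ?thesis by (metis append_eq_conv_conj)
qed



lemma par_windows:
  fixes k :: "nat \<Rightarrow> nat"
  assumes "bounded_gaps {i. i \<ge> 1 \<and> k (2 * i) > 1}" "bounded_gaps {i. i \<ge> 1 \<and> k (2 * i - 1) > 1}"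
  shows "\<exists>H. \<forall>x. (\<exists>a. even a \<and> x \<le> a \<and> a \<le> x + H \<and> 2 \<le> k a) \<and> (\<exists>a. odd a \<and> x \<le> a \<and> a \<le> x + H \<and> 2 \<le> k a)"
proof -
  obtain g1 where g1: "\<forall>n. \<exists>i\<in>{i. i \<ge> 1 \<and> k (2 * i) > 1}. n < i \<and> i \<le> n + g1"
    using assms(1) unfolding bounded_gaps_def by blast
  obtain g2 where g2: "\<forall>n. \<exists>i\<in>{i. i \<ge> 1 \<and> k (2 * i - 1) > 1}. n < i \<and> i \<le> n + g2"
    using assms(2) unfolding bounded_gaps_def by blast
  have "\<forall>x. (\<exists>a. even a \<and> x \<le> a \<and> a \<le> x + 2 * (g1 + g2) \<and> 2 \<le> k a) \<and>
            (\<exists>a. odd a \<and> x \<le> a \<and> a \<le> x + 2 * (g1 + g2) \<and> 2 \<le> k a)"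
  proof
    fix x
    obtain i where i: "i \<ge> 1" "k (2 * i) > 1" "x div 2 < i" "i \<le> x div 2 + g1" using g1 by blast
    obtain i' where i': "i' \<ge> 1" "k (2 * i' - 1) > 1" "x div 2 < i'" "i' \<le> x div 2 + g2" using g2 by blast
    have "even (2 * i) \<and> x \<le> 2 * i \<and> 2 * i \<le> x + 2 * (g1 + g2) \<and> 2 \<le> k (2 * i)" using i by auto
    moreover have "odd (2 * i' - 1) \<and> x \<le> 2 * i' - 1 \<and> 2 * i' - 1 \<le> x + 2 * (g1 + g2) \<and> 2 \<le> k (2 * i' - 1)"
      using i' by auto
    ultimately show "(\<exists>a. even a \<and> x \<le> a \<and> a \<le> x + 2 * (g1 + g2) \<and> 2 \<le> k a) \<and>
            (\<exists>a. odd a \<and> x \<le> a \<and> a \<le> x + 2 * (g1 + g2) \<and> 2 \<le> k a)" by blast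
  qed
  then show ?thesis by blast
qed

context kpos begin

lemma unif_letters:
  assumes H: "\<forall>x. (\<exists>a. even a \<and> x \<le> a \<and> a \<le> x + H \<and> 2 \<le> k a) \<and> (\<exists>a. odd a \<and> x \<le> a \<and> a \<le> x + H \<and> 2 \<le> k a)"
    and j: "1 \<le> j" and e: "e \<in> {1,2,3}"
  shows "{1,2,3} \<subseteq> set (sig k j (2 * H + 4) [e])"
proof -
  obtain a2 where a2: "even a2" "j \<le> a2" "a2 \<le> j + H" "2 \<le> k a2" using H by blast
  obtain a1 where a1: "odd a1" "a2 + 1 \<le> a1" "a1 \<le> a2 + 1 + H" "2 \<le> k a1" using H by blast
  have "odd (a1 - a2)" using a1 a2 by simp
  then show ?thesis using all_letters[OF j a2(2) _ _ a1(4) a2(4) _ e] a1 a2 by simp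
qed

end



declare sig.simps(2)[simp del]

context kpos begin

theorem backward:
  assumes itc: "infinite_type_coding k" and Bk: "\<forall>i\<ge>1. k i \<le> B"
    and H: "\<forall>x. (\<exists>a. even a \<and> x \<le> a \<and> a \<le> x + H \<and> 2 \<le> k a) \<and> (\<exists>a. odd a \<and> x \<le> a \<and> a \<le> x + H \<and> 2 \<le> k a)"
  shows "rhoLR k (2 * (B + 1) ^ (2 * (2 * H + 4) + 3))"
  unfolding rhoLR_def
proof (intro allI impI)
  fix i n :: nat assume i1: "1 \<le> i" and n0: "0 < n"
  define G where "G = 2 * H + 4"
  define C where "C = (B + 1) ^ (2 * G + 3)"
  have UL: "\<And>j e. 1 \<le> j \<Longrightarrow> e \<in> {1,2,3} \<Longrightarrow> {1,2,3} \<subseteq> set (sig k j G [e])"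
    unfolding G_def using unif_letters[OF H] by blast
  have exm: "\<exists>m. n \<le> al m"
  proof -
    obtain D where "n < length (sig k 1 D [3])" using len3_unbounded[OF itc] by blast
    then show ?thesis unfolding al_def by (intro exI[of _ D]) simp
  qed
  define m where "m = (LEAST m. n \<le> al m)"
  have m: "n \<le> al m" unfolding m_def using LeastI_ex[OF exm] .
  have mmin: "\<And>m'. m' < m \<Longrightarrow> al m' < n" unfolding m_def using not_less_Least by (metis not_le)
  define l0 where "l0 = m - 1 - G"
  have Mx: "\<And>e. e \<in> {1,2,3} \<Longrightarrow> length (sig k 1 l0 [e]) \<le> n"
  proof -
    fix e :: nat assume e: "e \<in> {1,2,3}"
    show "length (sig k 1 l0 [e]) \<le> n"
    proof (cases "G + 1 \<le> m")
      case True
      have "sig k 1 (m - 1) [3] = sig k 1 l0 (sig k (Suc l0) G [3])"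
        by (rule sig_comp') (use True in \<open>auto simp: l0_def\<close>)
      moreover have "e \<in> set (sig k (Suc l0) G [3])" using UL[of "Suc l0" 3] e by auto
      ultimately have "length (sig k 1 l0 [e]) \<le> al (m - 1)" unfolding al_def by (metis len_mem)
      moreover have "al (m - 1) < n" using mmin True by simp
      ultimately show ?thesis by simp
    next
      case False
      then have "l0 = 0" by (simp add: l0_def)
      then show ?thesis using n0 by simp
    qed
  qed
  define T where "T = m + 2 + G"
  have BB: "\<And>l c. l0 \<le> l \<Longrightarrow> l \<le> T \<Longrightarrow> c \<in> {1,2,3} \<Longrightarrow> length (sig k 1 l [c]) \<le> C * n"
  proof -
    fix l c :: nat assume l: "l0 \<le> l" "l \<le> T" and c: "c \<in> {1,2,3}"
    define W where "W = sig k (Suc l0) (l - l0) [c]"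
    have "sig k 1 l [c] = sig k 1 l0 W" unfolding W_def by (rule sig_comp') (use l in auto)
    moreover have abcW: "abc W" unfolding W_def using c by (intro abc_sig) simp
    ultimately have "length (sig k 1 l [c]) \<le> n * length W"
      using Lbound2[of W k 1 l0 n] Mx by (auto simp: abc_def)
    moreover have "length W \<le> (B + 1) ^ (l - l0) * 1" unfolding W_def using Lbound[OF Bk, of "Suc l0" "l - l0" "[c]"] by simp
    moreover have "(B + 1) ^ (l - l0) \<le> C"
    proof -
      have "l - l0 \<le> 2 * G + 3" using l by (simp add: T_def l0_def) 
      then show ?thesis unfolding C_def by (rule power_increasing) simp
    qed
    ultimately have "length W \<le> C" by simp
    then have "n * length W \<le> n * C" by (rule mult_le_mono2)
    then show "length (sig k 1 l [c]) \<le> C * n"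
      using \<open>length (sig k 1 l [c]) \<le> n * length W\<close> by (simp only: mult.commute[of C n])
  qed
  have BW: "\<And>l W. l0 \<le> l \<Longrightarrow> l \<le> T \<Longrightarrow> abc W \<Longrightarrow> length (sig k 1 l W) \<le> (C * n) * length W"
  proof -
    fix l W assume a: "l0 \<le> l" "l \<le> T" "abc W"
    have "\<forall>e\<in>set W. length (sig k 1 l [e]) \<le> C * n"
    proof
      fix e assume "e \<in> set W"
      then have "e \<in> {1,2,3}" using a(3) by (auto simp: abc_def)
      then show "length (sig k 1 l [e]) \<le> C * n" using BB a by blast
    qed
    then show "length (sig k 1 l W) \<le> (C * n) * length W" by (rule Lbound2)
  qed
  have m2T: "l0 \<le> m + 2" "m + 2 \<le> T" "l0 \<le> T" by (auto simp: l0_def T_def)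
  define N where "N = i + 3 * C * n + n + 1"
  obtain D' where D': "N < length (sig k 1 (T + D') [3])" using len3_big[OF itc, of 0 N T] by blast
  define P where "P = sig k 1 (T + D') [3]"
  define V' where "V' = sig k (Suc T) D' [3]"
  define V2 where "V2 = sig k (Suc (m + 2)) (G + D') [3]"
  have PV': "P = sig k 1 T V'" unfolding P_def V'_def by (rule P_eq)
  have PV2: "P = sig k 1 (m + 2) V2" unfolding P_def V2_def by (rule sig_comp') (auto simp: T_def)
  have V2V': "V2 = sig k (Suc (m + 2)) G V'" unfolding V2_def V'_def by (rule sig_comp') (auto simp: T_def)
  have abcV': "abc V'" "abc V2" unfolding V'_def V2_def by (auto intro: abc_sig)
  have lenP: "N < length P" using D' P_def by simp
  obtain q where q: "q < length V'" "length (sig k 1 T (take q V')) \<le> i" "i < length (sig k 1 T (take (Suc q) V'))"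
    using block_find[of i k 1 T V'] lenP PV' by (auto simp: N_def)
  have V'q: "\<And>p. p < length V' \<Longrightarrow> V' ! p \<in> {1,2,3}" using abcV' abc_nth by blast
  have q2: "Suc (Suc q) < length V'"
  proof (rule ccontr)
    assume "\<not> Suc (Suc q) < length V'"
    then have ld: "length (drop (Suc q) V') \<le> 1" by simp
    have "length P = length (sig k 1 T (take (Suc q) V')) + length (sig k 1 T (drop (Suc q) V'))"
      unfolding PV' by (metis append_take_drop_id length_append sig_append)
    moreover have "length (sig k 1 T (take (Suc q) V')) \<le> i + C * n"
      using len_take_Suc[OF q(1)] q(2) BB[OF m2T(3) order.refl V'q[OF q(1)]] by simp
    moreover have "length (sig k 1 T (drop (Suc q) V')) \<le> C * n * 1"
    proof -
      have "length (sig k 1 T (drop (Suc q) V')) \<le> C * n * length (drop (Suc q) V')"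
        using BW[OF m2T(3) order.refl] abcV' abc_drop by blast
      also have "\<dots> \<le> C * n * 1" using ld by (intro mult_le_mono2)
      finally show ?thesis .
    qed
    ultimately have "length P \<le> i + 2 * C * n" by simp
    then show False using lenP by (simp add: N_def)
  qed
  obtain r where r: "r < length V2" "length (sig k 1 (m + 2) (take r V2)) \<le> i"
      "i < length (sig k 1 (m + 2) (take (Suc r) V2))"
    using block_find[of i k 1 "m + 2" V2] lenP PV2 by (auto simp: N_def)
  have V2q: "\<And>p. p < length V2 \<Longrightarrow> V2 ! p \<in> {1,2,3}" using abcV' abc_nth by blast
  define c where "c = V2 ! r"
  have c: "c \<in> {1,2,3}" using V2q r(1) by (simp add: c_def)
  have r1: "Suc r < length V2"
  proof (rule ccontr)
    assume "\<not> Suc r < length V2"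
    then have "take (Suc r) V2 = V2" using r(1) by simp
    then have "length P = length (sig k 1 (m + 2) (take r V2)) + length (sig k 1 (m + 2) [c])"
      using PV2 len_take_Suc[OF r(1)] by (simp add: c_def)
    also have "\<dots> \<le> i + C * n" using r(2) BB[OF m2T(1) m2T(2) c] by simp
    finally show False using lenP by (simp add: N_def)
  qed
  define X where "X = sig k 1 (m + 2) [c] @ sig k 1 m [3]"
  have dropX: "\<And>p. Suc p < length V2 \<Longrightarrow>
      \<exists>Y. drop (length (sig k 1 (m + 2) (take p V2))) P = (sig k 1 (m + 2) [V2 ! p] @ sig k 1 m [3]) @ Y"
  proof -
    fix p assume p: "Suc p < length V2"
    have dp: "drop p V2 = V2 ! p # V2 ! Suc p # drop (Suc (Suc p)) V2"
      using p by (metis Cons_nth_drop_Suc Suc_lessD)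
    obtain z where z: "sig k (Suc m) 2 [V2 ! Suc p] = 3 # z" using sig2_hd3 V2q[OF p] by blast
    have "sig k 1 (m + 2) [V2 ! Suc p] = sig k 1 m (sig k (Suc m) 2 [V2 ! Suc p])"
      by (rule sig_comp') auto
    also have "\<dots> = sig k 1 m [3] @ sig k 1 m z" unfolding z by (rule sig_Cons)
    finally have e: "sig k 1 (m + 2) [V2 ! Suc p] = sig k 1 m [3] @ sig k 1 m z" .
    have "drop (length (sig k 1 (m + 2) (take p V2))) P = sig k 1 (m + 2) (drop p V2)"
      unfolding PV2 by (rule drop_sig)
    also have "\<dots> = sig k 1 (m + 2) [V2 ! p] @ sig k 1 (m + 2) [V2 ! Suc p] @ sig k 1 (m + 2) (drop (Suc (Suc p)) V2)"
      unfolding dp by (metis sig_Cons)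
    finally show "\<exists>Y. drop (length (sig k 1 (m + 2) (take p V2))) P = (sig k 1 (m + 2) [V2 ! p] @ sig k 1 m [3]) @ Y"
      unfolding e by auto
  qed
  define sr where "sr = length (sig k 1 (m + 2) (take r V2))"
  define Off where "Off = i - sr"
  have Off1: "Off < length (sig k 1 (m + 2) [c])" using r len_take_Suc[OF r(1)] by (simp add: Off_def sr_def c_def)
  have Off2: "Off + n \<le> length X" using Off1 m by (simp add: X_def al_def)
  have takeX: "\<And>p. Suc p < length V2 \<Longrightarrow> V2 ! p = c \<Longrightarrow>
      take n (drop (length (sig k 1 (m + 2) (take p V2)) + Off) P) = take n (drop Off X)"
  proof -
    fix p assume p: "Suc p < length V2" "V2 ! p = c"
    obtain Y where Y: "drop (length (sig k 1 (m + 2) (take p V2))) P = X @ Y" using dropX[OF p(1)] p(2) by (auto simp: X_def)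
    have "drop (length (sig k 1 (m + 2) (take p V2)) + Off) P = drop Off (X @ Y)"
      using Y by (metis drop_drop add.commute)
    then show "take n (drop (length (sig k 1 (m + 2) (take p V2)) + Off) P) = take n (drop Off X)"
      using Off2 by simp
  qed
  have wi: "take n (drop i P) = take n (drop Off X)"
    using takeX[OF r1 c_def[symmetric]] r(2) by (simp add: Off_def sr_def)
  (* the letter c in the next top block *)
  define Z where "Z = sig k (Suc (m + 2)) G [V' ! Suc q]"
  have "c \<in> set Z" unfolding Z_def using UL[of "Suc (m + 2)" "V' ! Suc q"] c V'q[of "Suc q"] q2 by auto
  then obtain h where h: "h < length Z" "Z ! h = c" by (meson in_set_conv_nth)
  define ofs where "ofs = length (sig k (Suc (m + 2)) G (take (Suc q) V'))"
  define Tl where "Tl = sig k (Suc (m + 2)) G (drop (Suc (Suc q)) V')"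
  have V'd: "V' = take (Suc q) V' @ V' ! Suc q # drop (Suc (Suc q)) V'"
    using q2 by (metis Cons_nth_drop_Suc Suc_lessD append_take_drop_id)
  have V2d: "V2 = sig k (Suc (m + 2)) G (take (Suc q) V') @ Z @ Tl"
    unfolding V2V' Z_def Tl_def by (subst V'd) (metis sig_append sig_Cons)
  have Tlne: "Tl \<noteq> []" unfolding Tl_def using q2 abcV' abc_drop by (intro sig_ne) auto
  define r' where "r' = ofs + h"
  have r'c: "V2 ! r' = c" using V2d h by (simp add: r'_def ofs_def nth_append)
  have r'1: "Suc r' < length V2" using V2d h Tlne by (simp add: r'_def ofs_def) (metis length_greater_0_conv add_less_mono1 Suc_leI le_neq_implies_less not_less_eq nat_add_left_cancel_less add_Suc_right length_0_conv less_add_Suc1 trans_less_add1 less_trans_Suc)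
  define s' where "s' = length (sig k 1 (m + 2) (take r' V2))"
  define jj where "jj = s' + Off"
  have wj: "take n (drop jj P) = take n (drop i P)"
    using takeX[OF r'1 r'c] wi by (simp add: jj_def s'_def)
  have lvl: "\<And>W. sig k 1 (m + 2) (sig k (Suc (m + 2)) G W) = sig k 1 T W"
    by (rule sig_comp'[symmetric]) (auto simp: T_def)
  have "i < jj"
  proof -
    have "length (sig k 1 (m + 2) (take ofs V2)) \<le> s'"
      unfolding s'_def r'_def by (rule len_take_mono) simp
    moreover have "take ofs V2 = sig k (Suc (m + 2)) G (take (Suc q) V')"
      unfolding ofs_def V2V' by (rule take_sig)
    ultimately have "length (sig k 1 T (take (Suc q) V')) \<le> s'" using lvl by simp
    then show ?thesis using q(3) by (simp add: jj_def)
  qed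
  moreover have "jj < i + 2 * C * n"
  proof -
    have "jj < length (sig k 1 (m + 2) (take (Suc r') V2))"
      using len_take_Suc[of r' V2 k 1 "m + 2"] r'1 r'c Off1 by (simp add: jj_def s'_def)
    also have "\<dots> \<le> length (sig k 1 (m + 2) (take (ofs + length Z) V2))"
      by (rule len_take_mono) (use h in \<open>simp add: r'_def\<close>)
    also have "take (ofs + length Z) V2 = sig k (Suc (m + 2)) G (take (Suc (Suc q)) V')"
    proof -
      have "take (Suc (Suc q)) V' = take (Suc q) V' @ [V' ! Suc q]" using q2 by (simp add: take_Suc_conv_app_nth)
      then have "length (sig k (Suc (m + 2)) G (take (Suc (Suc q)) V')) = ofs + length Z"
        by (simp add: ofs_def Z_def)
      then show ?thesis unfolding V2V' by (metis take_sig)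
    qed
    also have "length (sig k 1 (m + 2) (sig k (Suc (m + 2)) G (take (Suc (Suc q)) V'))) =
        length (sig k 1 T (take (Suc (Suc q)) V'))" using lvl by simp
    also have "\<dots> = length (sig k 1 T (take q V')) + length (sig k 1 T [V' ! q]) + length (sig k 1 T [V' ! Suc q])"
      using len_take_Suc[of "Suc q" V' k 1 T] len_take_Suc[of q V' k 1 T] q2 by simp
    also have "\<dots> \<le> i + C * n + C * n"
      using q(2) BB[OF m2T(3) order.refl V'q[OF q(1)]] BB[OF m2T(3) order.refl V'q[of "Suc q"]] q2 by simp
    finally show ?thesis by simp
  qed
  moreover have "\<forall>m'<n. rho k (jj + m') = rho k (i + m')"
  proof (intro allI impI)
    fix m' assume m': "m' < n"
    have lens: "jj + m' < length P" "i + m' < length P" using \<open>jj < i + 2 * C * n\<close> m' lenP by (auto simp: N_def)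
    have "rho k (jj + m') = P ! (jj + m')" using rho_nth[OF itc] lens P_def by simp
    also have "\<dots> = take n (drop jj P) ! m'" using m' lens by simp
    also have "\<dots> = take n (drop i P) ! m'" using wj by simp
    also have "\<dots> = P ! (i + m')" using m' lens by simp
    also have "\<dots> = rho k (i + m')" using rho_nth[OF itc] lens P_def by simp
    finally show "rho k (jj + m') = rho k (i + m')" .
  qed
  ultimately show "\<exists>j. i < j \<and> j \<le> i + 2 * (B + 1) ^ (2 * (2 * H + 4) + 3) * n \<and>
      (\<forall>m<n. rho k (j + m) = rho k (i + m))"
    by (intro exI[of _ jj]) (simp add: C_def G_def)
qed

end



theorem theorem2p6:
  fixes k :: "nat \<Rightarrow> nat"
  assumes "infinite_type_coding k"
  shows "linearly_recurrent (subshift k) \<longleftrightarrow>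
           ((\<exists>B. \<forall>i\<ge>1. k i \<le> B)
            \<and> bounded_gaps {i. i \<ge> 1 \<and> k (2 * i) > 1}
            \<and> bounded_gaps {i. i \<ge> 1 \<and> k (2 * i - 1) > 1})"
proof -
  interpret kpos k by (rule itc_kpos[OF assms])
  show ?thesis
  proof
    assume "linearly_recurrent (subshift k)"
    then obtain L where "rhoLR k L" using LR_imp_rhoLR by blast
    then show "(\<exists>B. \<forall>i\<ge>1. k i \<le> B) \<and> bounded_gaps {i. i \<ge> 1 \<and> k (2 * i) > 1}
            \<and> bounded_gaps {i. i \<ge> 1 \<and> k (2 * i - 1) > 1}" using forward[OF assms] by blast
  next
    assume a: "(\<exists>B. \<forall>i\<ge>1. k i \<le> B) \<and> bounded_gaps {i. i \<ge> 1 \<and> k (2 * i) > 1}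
            \<and> bounded_gaps {i. i \<ge> 1 \<and> k (2 * i - 1) > 1}"
    then obtain B where B: "\<forall>i\<ge>1. k i \<le> B" by blast
    obtain H where H: "\<forall>x. (\<exists>a. even a \<and> x \<le> a \<and> a \<le> x + H \<and> 2 \<le> k a) \<and> (\<exists>a. odd a \<and> x \<le> a \<and> a \<le> x + H \<and> 2 \<le> k a)"
      using par_windows a by blast
    show "linearly_recurrent (subshift k)"
      using backward[OF assms B H] by (rule rhoLR_imp_LR)
  qed
qed



end
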